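(* Let $A$ be a commutative noetherian ring containing a field $k$ with $1/2\in k$, and let $P$ be a projective $A$-module. The obstruction class map $\chi:\mathcal{LO}(P)\to\pi_0(\mathcal{Q}(P))$ induces a well-defined map $\overline{\chi}:\pi_0(\mathcal{LO}(P))\to\pi_0(\mathcal{Q}(P))$, and $\overline\chi$ is a bijection. Its inverse is the map $\overline{\eta}':\pi_0(\mathcal{Q}(P))\to\pi_0(\mathcal{LO}(P))$ induced by $\eta'$. Consequently the induced maps $\overline\eta:\pi_0(\widetilde Q(P))\to\pi_0(\mathcal{LO}(P))$, $\overline{\eta}'$, $\overline\nu:\pi_0(\widetilde Q(P))\to\pi_0(\mathcal{Q}(P))$ and $\overline\kappa:\pi_0(\widetilde Q(P))\to\pi_0(\widetilde Q'(P))$ are all bijections.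
   Context: $P^*=\mathrm{Hom}_A(P,A)$ and $P[T]=P\otimes_AA[T]$. Sets. Define $\widetilde Q(P)=\{(f,p,s)\in P^*\oplus P\oplus A: f(p)+s(s-1)=0\}$, $\widetilde Q'(P)=\{(f,p,z): f(p)+z^2=1\}$, $\mathcal{Q}(P)=\{(f,s)\in P^*\oplus A: s(1-s)\in f(P)\}$. A local $P$-orientation is a pair $(I,\omega)$, $I$ an ideal and $\omega:P\to I/I^2$ surjective; $\mathcal{LO}(P)$ is their set. All of these are defined likewise over $A[T]$ for $P[T]$. Homotopy sets. For $\mathcal{F}=\widetilde Q,\widetilde Q',\mathcal{Q}$, $\pi_0(\mathcal{F}(P))$ is the quotient of $\mathcal{F}(P)$ by the equivalence relation generated by $H(0)\sim H(1)$ for $H(T)\in\mathcal{F}(P[T])$, with $H(t)$ the specialization $T=t$. $\pi_0(\mathcal{LO}(P))$ is the quotient of $\mathcal{LO}(P)$ by the equivalence relation generated by $(J(0),\Omega(0))\sim(J(1),\Omega(1))$ for $(J,\Omega)\in\mathcal{LO}(P[T])$, where $J(t)$ is the image of $J$ under $T\mapsto t$ and $\Omega(t)$ is the induced map. Maps. - $\nu(f,p,s)=(f,s)$. - $\eta(f,p,s)=\eta'(f,s)=(f(P)+As,\omega)$, with $\omega$ induced by $f$. - $\kappa(f,p,s)=(2f,2p,2s-1)$, a bijection $\widetilde Q(P)\to\widetilde Q'(P)$. All of these are compatible with homotopy and induce the barred maps. - $\chi(I,\omega)$ is the class $[(f,s)]$ of any $(f,s)\in\mathcal{Q}(P)$ such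 that $f:P\to I$ lifts $\omega$, $s\in I$, and $I=f(P)+As$. Such pairs exist, and this class is independent of the choice. *)

theory Defs
  imports "HOL-Computational_Algebra.Polynomial"
begin

section \<open>Ring-theoretic notions (the ring is the whole type 'a)\<close>

definition is_ideal :: "'a::comm_ring_1 set \<Rightarrow> bool" where
  "is_ideal I \<longleftrightarrow> 0 \<in> I \<and> (\<forall>x\<in>I. \<forall>y\<in>I. x + y \<in> I) \<and> (\<forall>a. \<forall>x\<in>I. a * x \<in> I)"

definition ideal_gen :: "'a::comm_ring_1 set \<Rightarrow> 'a set" where
  "ideal_gen F = {(\<Sum>x\<in>F. c x * x) | c. True}"

definition noetherian_ring :: "'a::comm_ring_1 itself \<Rightarrow> bool" where
  "noetherian_ring (t::'a itself) \<longleftrightarrow> (\<forall>I::'a set. is_ideal I \<longrightarrow> (\<exists>F. finite F \<and> F \<subseteq> I \<and> I = ideal_gen F))"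

definition is_subfield :: "'a::comm_ring_1 set \<Rightarrow> bool" where
  "is_subfield k \<longleftrightarrow> 0 \<in> k \<and> 1 \<in> k \<and> (0::'a) \<noteq> 1 \<and>
     (\<forall>x\<in>k. \<forall>y\<in>k. x + y \<in> k \<and> x * y \<in> k) \<and> (\<forall>x\<in>k. - x \<in> k) \<and>
     (\<forall>x\<in>k. x \<noteq> 0 \<longrightarrow> (\<exists>y\<in>k. x * y = 1))"

definition contains_field_with_half :: "'a::comm_ring_1 itself \<Rightarrow> bool" where
  "contains_field_with_half (t::'a itself) \<longleftrightarrow> (\<exists>k::'a set. is_subfield k \<and> (\<exists>h\<in>k. 2 * h = 1))"

definition ideal_sq :: "'a::comm_ring_1 set \<Rightarrow> 'a set" where
  "ideal_sq I = {(\<Sum>i<n. x i * y i) | (n::nat) x y. \<forall>i<n. x i \<in> I \<and> y i \<in> I}"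

text \<open>Elements of I/I^2, represented as cosets x + I^2 with x in I.\<close>
definition quot_sq :: "'a::comm_ring_1 set \<Rightarrow> 'a set set" where
  "quot_sq I = {(+) x ` ideal_sq I | x. x \<in> I}"

section \<open>Modules (the module is the whole type 'm with scalar action sc)\<close>

definition dual :: "('r::comm_ring_1 \<Rightarrow> 'm::ab_group_add \<Rightarrow> 'm) \<Rightarrow> ('m \<Rightarrow> 'r) set" where
  "dual sc = {f. module_hom sc (*) f}"

text \<open>Projective module, via the dual basis characterisation (indexed by elements of P).\<close>
definition projective_module :: "('r::comm_ring_1 \<Rightarrow> 'm::ab_group_add \<Rightarrow> 'm) \<Rightarrow> bool" where
  "projective_module sc \<longleftrightarrow> module sc \<and>
     (\<exists>\<phi> :: 'm \<Rightarrow> 'm \<Rightarrow> 'r. (\<forall>x. \<phi> x \<in> dual sc) \<and>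
        (\<forall>p. finite {x. \<phi> x p \<noteq> 0} \<and> p = (\<Sum>x\<in>{x. \<phi> x p \<noteq> 0}. sc (\<phi> x p) x)))"

definition Qt :: "('r::comm_ring_1 \<Rightarrow> 'm::ab_group_add \<Rightarrow> 'm) \<Rightarrow> (('m \<Rightarrow> 'r) \<times> 'm \<times> 'r) set" where
  "Qt sc = {(f, p, s). f \<in> dual sc \<and> f p + s * (s - 1) = 0}"

definition Qt' :: "('r::comm_ring_1 \<Rightarrow> 'm::ab_group_add \<Rightarrow> 'm) \<Rightarrow> (('m \<Rightarrow> 'r) \<times> 'm \<times> 'r) set" where
  "Qt' sc = {(f, p, z). f \<in> dual sc \<and> f p + z\<^sup>2 = 1}"

definition Qs :: "('r::comm_ring_1 \<Rightarrow> 'm::ab_group_add \<Rightarrow> 'm) \<Rightarrow> (('m \<Rightarrow> 'r) \<times> 'r) set" where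
  "Qs sc = {(f, s). f \<in> dual sc \<and> s * (1 - s) \<in> range f}"

text \<open>Local orientations (I, omega): omega maps p to an element (coset) of I/I^2,
  is linear (checked on representatives) and surjective.\<close>
definition LO :: "('r::comm_ring_1 \<Rightarrow> 'm::ab_group_add \<Rightarrow> 'm) \<Rightarrow> ('r set \<times> ('m \<Rightarrow> 'r set)) set" where
  "LO sc = {(I, \<omega>). is_ideal I \<and> (\<forall>p. \<omega> p \<in> quot_sq I) \<and>
      (\<forall>p q x y. x \<in> \<omega> p \<longrightarrow> y \<in> \<omega> q \<longrightarrow> x + y \<in> \<omega> (p + q)) \<and>
      (\<forall>a p x. x \<in> \<omega> p \<longrightarrow> a * x \<in> \<omega> (sc a p)) \<and>
      (\<forall>x\<in>I. \<exists>p. x \<in> \<omega> p)}"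

definition nu :: "('m \<Rightarrow> 'r) \<times> 'm \<times> 'r \<Rightarrow> ('m \<Rightarrow> 'r) \<times> 'r" where
  "nu = (\<lambda>(f, p, s). (f, s))"

definition eta' :: "('m \<Rightarrow> 'r::comm_ring_1) \<times> 'r \<Rightarrow> 'r set \<times> ('m \<Rightarrow> 'r set)" where
  "eta' = (\<lambda>(f, s). let I = {f q + a * s | q a. True} in (I, \<lambda>p. (+) (f p) ` ideal_sq I))"

definition eta :: "('m \<Rightarrow> 'r::comm_ring_1) \<times> 'm \<times> 'r \<Rightarrow> 'r set \<times> ('m \<Rightarrow> 'r set)" where
  "eta x = eta' (nu x)"

definition kappa :: "('r::comm_ring_1 \<Rightarrow> 'm \<Rightarrow> 'm) \<Rightarrow> ('m \<Rightarrow> 'r) \<times> 'm \<times> 'r \<Rightarrow> ('m \<Rightarrow> 'r) \<times> 'm \<times> 'r" where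
  "kappa sc = (\<lambda>(f, p, s). (\<lambda>q. 2 * f q, sc 2 p, 2 * s - 1))"

text \<open>(f,s) is an admissible choice for chi(I,omega).\<close>
definition chi_wit :: "('r::comm_ring_1 \<Rightarrow> 'm::ab_group_add \<Rightarrow> 'm) \<Rightarrow> 'r set \<times> ('m \<Rightarrow> 'r set) \<Rightarrow> ('m \<Rightarrow> 'r) \<times> 'r \<Rightarrow> bool" where
  "chi_wit sc = (\<lambda>(I, \<omega>) (f, s). (f, s) \<in> Qs sc \<and> (\<forall>p. f p \<in> I \<and> f p \<in> \<omega> p) \<and> s \<in> I \<and>
      I = {f q + a * s | q a. True})"

section \<open>Polynomial extension: A[T] = 'a poly, P[T] = 'b poly\<close>

definition pscale :: "('a::comm_ring_1 \<Rightarrow> 'b::ab_group_add \<Rightarrow> 'b) \<Rightarrow> 'a poly \<Rightarrow> 'b poly \<Rightarrow> 'b poly" where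
  "pscale sc a p = (\<Sum>i\<le>degree a. \<Sum>j\<le>degree p. monom (sc (coeff a i) (coeff p j)) (i + j))"

definition peval :: "('a::comm_ring_1 \<Rightarrow> 'b::ab_group_add \<Rightarrow> 'b) \<Rightarrow> 'a \<Rightarrow> 'b poly \<Rightarrow> 'b" where
  "peval sc t p = (\<Sum>i\<le>degree p. sc (t ^ i) (coeff p i))"

definition spec_dual :: "'a::comm_ring_1 \<Rightarrow> ('b::zero poly \<Rightarrow> 'a poly) \<Rightarrow> ('b \<Rightarrow> 'a)" where
  "spec_dual t F = (\<lambda>q. poly (F [:q:]) t)"

definition spec_Qt :: "('a::comm_ring_1 \<Rightarrow> 'b::ab_group_add \<Rightarrow> 'b) \<Rightarrow> 'a \<Rightarrow>
    ('b poly \<Rightarrow> 'a poly) \<times> 'b poly \<times> 'a poly \<Rightarrow> ('b \<Rightarrow> 'a) \<times> 'b \<times> 'a" where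
  "spec_Qt sc t = (\<lambda>(F, p, s). (spec_dual t F, peval sc t p, poly s t))"

definition spec_Qs :: "'a::comm_ring_1 \<Rightarrow> ('b::zero poly \<Rightarrow> 'a poly) \<times> 'a poly \<Rightarrow> ('b \<Rightarrow> 'a) \<times> 'a" where
  "spec_Qs t = (\<lambda>(F, s). (spec_dual t F, poly s t))"

definition spec_LO :: "'a::comm_ring_1 \<Rightarrow> 'a poly set \<times> ('b::zero poly \<Rightarrow> 'a poly set) \<Rightarrow> 'a set \<times> ('b \<Rightarrow> 'a set)" where
  "spec_LO t = (\<lambda>(J, \<Omega>). let Jt = (\<lambda>f. poly f t) ` J in
      (Jt, \<lambda>q. {poly f t + y | f y. f \<in> \<Omega> [:q:] \<and> y \<in> ideal_sq Jt}))"

definition htpy_rel :: "'x set \<Rightarrow> 'h set \<Rightarrow> ('h \<Rightarrow> 'x) \<Rightarrow> ('h \<Rightarrow> 'x) \<Rightarrow> ('x \<times> 'x) set" where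
  "htpy_rel X XT ev0 ev1 = {(x, y). x \<in> X \<and> y \<in> X \<and>
      equivclp (\<lambda>u v. u \<in> X \<and> v \<in> X \<and> (\<exists>H\<in>XT. ev0 H = u \<and> ev1 H = v)) x y}"

definition Qt_rel where
  "Qt_rel sc = htpy_rel (Qt sc) (Qt (pscale sc)) (spec_Qt sc 0) (spec_Qt sc 1)"
definition Qt'_rel where
  "Qt'_rel sc = htpy_rel (Qt' sc) (Qt' (pscale sc)) (spec_Qt sc 0) (spec_Qt sc 1)"
definition Qs_rel where
  "Qs_rel sc = htpy_rel (Qs sc) (Qs (pscale sc)) (spec_Qs 0) (spec_Qs 1)"
definition LO_rel where
  "LO_rel sc = htpy_rel (LO sc) (LO (pscale sc)) (spec_LO 0) (spec_LO 1)"

definition pi0_Qt where "pi0_Qt sc = Qt sc // Qt_rel sc"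
definition pi0_Qt' where "pi0_Qt' sc = Qt' sc // Qt'_rel sc"
definition pi0_Qs where "pi0_Qs sc = Qs sc // Qs_rel sc"
definition pi0_LO where "pi0_LO sc = LO sc // LO_rel sc"

definition compat :: "('x \<times> 'x) set \<Rightarrow> ('y \<times> 'y) set \<Rightarrow> ('x \<Rightarrow> 'y) \<Rightarrow> bool" where
  "compat R S f \<longleftrightarrow> (\<forall>x y. (x, y) \<in> R \<longrightarrow> (f x, f y) \<in> S)"

definition induced :: "('y \<times> 'y) set \<Rightarrow> ('x \<Rightarrow> 'y) \<Rightarrow> 'x set \<Rightarrow> 'y set" where
  "induced S f C = (\<Union>x\<in>C. S `` {f x})"

definition chibar where
  "chibar sc D = \<Union>{Qs_rel sc `` {a} | x a. x \<in> D \<and> chi_wit sc x a}"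

end

theory Submission
  imports Defs
begin


section \<open>Ideals\<close>

lemma is_idealD:
  assumes "is_ideal I"
  shows "0 \<in> I" "x \<in> I \<Longrightarrow> y \<in> I \<Longrightarrow> x + y \<in> I" "x \<in> I \<Longrightarrow> a * x \<in> I"
  using assms unfolding is_ideal_def by auto

lemma ideal_0: "is_ideal I \<Longrightarrow> 0 \<in> I" by (simp add: is_ideal_def)
lemma ideal_add: "is_ideal I \<Longrightarrow> x \<in> I \<Longrightarrow> y \<in> I \<Longrightarrow> x + y \<in> I" by (simp add: is_ideal_def)
lemma ideal_multL: "is_ideal I \<Longrightarrow> x \<in> I \<Longrightarrow> a * x \<in> I" by (simp add: is_ideal_def)
lemma ideal_multR: "is_ideal I \<Longrightarrow> x \<in> I \<Longrightarrow> x * a \<in> I"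
  by (metis ideal_multL mult.commute)
lemma ideal_uminus: "is_ideal I \<Longrightarrow> x \<in> I \<Longrightarrow> - x \<in> I"
  using ideal_multL[of I x "-1"] by simp
lemma ideal_diff: "is_ideal I \<Longrightarrow> x \<in> I \<Longrightarrow> y \<in> I \<Longrightarrow> x - y \<in> I"
  using ideal_add[of I x "-y"] ideal_uminus[of I y] by simp
lemma ideal_sum: "is_ideal I \<Longrightarrow> (\<And>i. i \<in> S \<Longrightarrow> f i \<in> I) \<Longrightarrow> sum f S \<in> I"
proof (induction S rule: infinite_finite_induct)
  case (infinite A) then show ?case by (simp add: ideal_0)
next
  case empty then show ?case by (simp add: ideal_0)
next
  case (insert x F) then show ?case by (simp add: ideal_add)
qed

lemma ideal_sq_iff: "u \<in> ideal_sq I \<longleftrightarrow> (\<exists>(n::nat) x y. u = (\<Sum>i<n. x i * y i) \<and> (\<forall>i<n. x i \<in> I \<and> y i \<in> I))"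
  unfolding ideal_sq_def by blast

lemma ideal_gen_iff: "x \<in> ideal_gen F \<longleftrightarrow> (\<exists>c. x = (\<Sum>h\<in>F. c h * h))"
  unfolding ideal_gen_def by blast

lemma sum_lessThan_add_nat: "sum f {..<n+m} = sum f {..<n} + sum (\<lambda>i. f (n+i)) {..<(m::nat)}"
  by (induction m) (auto simp: add.assoc)

lemma ideal_sq_prod: "x \<in> I \<Longrightarrow> y \<in> I \<Longrightarrow> x * y \<in> ideal_sq I"
  unfolding ideal_sq_def by (rule CollectI, rule exI[of _ 1], auto)

lemma ideal_sq_0: "0 \<in> ideal_sq I"
  unfolding ideal_sq_def by (rule CollectI, rule exI[of _ 0], auto)

lemma ideal_sq_add: assumes "u \<in> ideal_sq I" "v \<in> ideal_sq I" shows "u + v \<in> ideal_sq I"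
proof -
  obtain n :: nat and x y where u: "u = (\<Sum>i<n. x i * y i)" "\<forall>i<n. x i \<in> I \<and> y i \<in> I"
    using assms(1) unfolding ideal_sq_iff by blast
  obtain m :: nat and x' y' where v: "v = (\<Sum>i<m. x' i * y' i)" "\<forall>i<m. x' i \<in> I \<and> y' i \<in> I"
    using assms(2) unfolding ideal_sq_iff by blast
  define X where "X i = (if i < n then x i else x' (i - n))" for i
  define Y where "Y i = (if i < n then y i else y' (i - n))" for i
  have "(\<Sum>i<n+m. X i * Y i) = u + v"
    unfolding sum_lessThan_add_nat u v X_def Y_def by simp
  moreover have "\<forall>i<n+m. X i \<in> I \<and> Y i \<in> I" using u v by (auto simp: X_def Y_def)
  ultimately show ?thesis unfolding ideal_sq_iff by (intro exI[of _ "n+m"] exI[of _ X] exI[of _ Y]) auto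
qed

lemma ideal_sq_mult: assumes "u \<in> ideal_sq I" "is_ideal I" shows "a * u \<in> ideal_sq I"
proof -
  obtain n :: nat and x y where u: "u = (\<Sum>i<n. x i * y i)" "\<forall>i<n. x i \<in> I \<and> y i \<in> I"
    using assms(1) unfolding ideal_sq_iff by blast
  have "a * u = (\<Sum>i<n. (a * x i) * y i)" by (simp add: u sum_distrib_left mult.assoc)
  moreover have "\<forall>i<n. a * x i \<in> I \<and> y i \<in> I" using u assms(2) by (auto simp: ideal_multL)
  ultimately show ?thesis unfolding ideal_sq_iff by (intro exI[of _ n] exI[of _ "\<lambda>i. a * x i"] exI[of _ y]) auto
qed

lemma ideal_sq_ideal: "is_ideal I \<Longrightarrow> is_ideal (ideal_sq I)"
  unfolding is_ideal_def[of "ideal_sq I"] by (auto simp: ideal_sq_0 ideal_sq_add ideal_sq_mult)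

lemma ideal_sq_subset: "is_ideal I \<Longrightarrow> ideal_sq I \<subseteq> I"
  unfolding ideal_sq_def by (auto intro!: ideal_sum ideal_multL)

lemma ideal_sq_mono: "I \<subseteq> J \<Longrightarrow> ideal_sq I \<subseteq> ideal_sq J"
  unfolding ideal_sq_def by blast

lemma ideal_gen_add: assumes "x \<in> ideal_gen F" "y \<in> ideal_gen F" shows "x + y \<in> ideal_gen F"
proof -
  obtain c d where "x = (\<Sum>h\<in>F. c h * h)" "y = (\<Sum>h\<in>F. d h * h)" using assms unfolding ideal_gen_iff by blast
  then have "x + y = (\<Sum>h\<in>F. (c h + d h) * h)" by (simp add: sum.distrib distrib_right)
  then show ?thesis unfolding ideal_gen_iff by (rule exI[where x="\<lambda>h. c h + d h"])
qed

lemma ideal_gen_mult: assumes "x \<in> ideal_gen F" shows "a * x \<in> ideal_gen F"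
proof -
  obtain c where "x = (\<Sum>h\<in>F. c h * h)" using assms unfolding ideal_gen_iff by blast
  then have "a * x = (\<Sum>h\<in>F. (a * c h) * h)" by (simp add: sum_distrib_left mult.assoc)
  then show ?thesis unfolding ideal_gen_iff by (rule exI[where x="\<lambda>h. a * c h"])
qed

lemma ideal_gen_0: "0 \<in> ideal_gen F"
  unfolding ideal_gen_iff by (rule exI[where x="\<lambda>h. 0"]) simp

lemma ideal_gen_ideal: "is_ideal (ideal_gen F)"
  unfolding is_ideal_def by (auto intro: ideal_gen_add ideal_gen_mult ideal_gen_0)

lemma ideal_gen_base: assumes "finite F" "x \<in> F" shows "x \<in> ideal_gen F"
proof -
  have "(\<Sum>h\<in>F. (if h = x then 1 else 0) * h) = x"
    using assms by (simp add: if_distrib[of "\<lambda>c. c * _"] sum.delta cong: if_cong)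
  then show ?thesis unfolding ideal_gen_iff by metis
qed

lemma ideal_gen_least: "is_ideal I \<Longrightarrow> F \<subseteq> I \<Longrightarrow> ideal_gen F \<subseteq> I"
  unfolding ideal_gen_def by (auto intro!: ideal_sum ideal_multL)

section \<open>Nakayama\<close>

lemma nak_sq:
  fixes J K :: "'a::comm_ring_1 set"
  assumes J: "is_ideal J" and K: "is_ideal K"
    and hyp: "\<forall>y\<in>J. \<exists>c. e * y - (\<Sum>h\<in>G. c h * h) \<in> K"
    and v: "v \<in> ideal_sq J"
  shows "\<exists>a. (\<forall>h. a h \<in> J) \<and> e * v - (\<Sum>h\<in>G. a h * h) \<in> K"
proof -
  obtain n :: nat and x y where v': "v = (\<Sum>i<n. x i * y i)" "\<forall>i<n. x i \<in> J \<and> y i \<in> J"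
    using v unfolding ideal_sq_iff by blast
  have "\<exists>a. (\<forall>h. a h \<in> J) \<and> e * (\<Sum>i<m. x i * y i) - (\<Sum>h\<in>G. a h * h) \<in> K" if "m \<le> n" for m
    using that
  proof (induction m)
    case 0 then show ?case by (auto intro!: exI[of _ "\<lambda>_. 0"] simp: ideal_0 J K)
  next
    case (Suc m)
    then obtain a where a: "\<forall>h. a h \<in> J" "e * (\<Sum>i<m. x i * y i) - (\<Sum>h\<in>G. a h * h) \<in> K" by auto
    from Suc.prems v' have xy: "x m \<in> J" "y m \<in> J" by auto
    obtain c where c: "e * y m - (\<Sum>h\<in>G. c h * h) \<in> K" using hyp xy by blast
    define a' where "a' h = a h + x m * c h" for h
    have "e * (\<Sum>i<Suc m. x i * y i) - (\<Sum>h\<in>G. a' h * h)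
       = (e * (\<Sum>i<m. x i * y i) - (\<Sum>h\<in>G. a h * h)) + x m * (e * y m - (\<Sum>h\<in>G. c h * h))"
      by (simp add: a'_def algebra_simps sum.distrib sum_distrib_left)
    also have "\<dots> \<in> K" using a(2) c K by (simp add: ideal_add ideal_multL)
    finally show ?case using a(1) xy J by (auto simp: a'_def intro!: exI[of _ a'] ideal_add ideal_multR)
  qed
  then show ?thesis using v'(1) by blast
qed

lemma nak_induct:
  fixes J K :: "'a::comm_ring_1 set"
  assumes J: "is_ideal J" and K: "is_ideal K"
    and cov: "\<forall>y\<in>J. \<exists>k\<in>K. \<exists>v\<in>ideal_sq J. y = k + v"
  shows "finite G \<Longrightarrow> G \<subseteq> J \<Longrightarrow> 1 - e \<in> J \<Longrightarrow> (\<forall>y\<in>J. \<exists>c. e * y - (\<Sum>h\<in>G. c h * h) \<in> K)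
     \<Longrightarrow> \<exists>e'. 1 - e' \<in> J \<and> (\<forall>y\<in>J. e' * y \<in> K)"
proof (induction G arbitrary: e rule: finite_induct)
  case empty then show ?case by auto
next
  case (insert g G e)
  have gJ: "g \<in> J" using insert by auto
  have "e * g \<in> J" using gJ J by (simp add: ideal_multL)
  then obtain k0 v where k0: "k0 \<in> K" "v \<in> ideal_sq J" "e * g = k0 + v" using cov by blast
  obtain a where a: "\<forall>h. a h \<in> J" "e * v - (\<Sum>h\<in>insert g G. a h * h) \<in> K"
    using nak_sq[OF J K insert.prems(3) k0(2)] by blast
  define k where "k = e * v - (\<Sum>h\<in>insert g G. a h * h)"
  have kK: "k \<in> K" using a k_def by simp
  have eq1: "(e * e - a g) * g = (\<Sum>h\<in>G. a h * h) + (e * k0 + k)"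
  proof -
    have "e * e * g = e * k0 + e * v" by (simp add: mult.assoc k0(3) distrib_left)
    also have "e * v = (\<Sum>h\<in>insert g G. a h * h) + k" by (simp add: k_def)
    finally show ?thesis using insert.hyps by (simp add: algebra_simps)
  qed
  have ek: "e * k0 + k \<in> K" using kK k0 K by (simp add: ideal_add ideal_multL)
  define e1 where "e1 = (e * e - a g) * e"
  have "1 - e1 \<in> J"
  proof -
    have "1 - e1 = (1 - e) * (1 + e + e * e) + a g * e" by (simp add: e1_def algebra_simps)
    then show ?thesis using insert.prems(2) a(1) J by (simp add: ideal_add ideal_multL ideal_multR)
  qed
  moreover have "\<forall>y\<in>J. \<exists>c. e1 * y - (\<Sum>h\<in>G. c h * h) \<in> K"
  proof
    fix y assume "y \<in> J"
    then obtain c where c: "e * y - (\<Sum>h\<in>insert g G. c h * h) \<in> K" using insert.prems(3) by blast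
    define ky where "ky = e * y - (\<Sum>h\<in>insert g G. c h * h)"
    have "e1 * y - (\<Sum>h\<in>G. (c g * a h + (e * e - a g) * c h) * h)
        = c g * (e * k0 + k) + (e * e - a g) * ky"
    proof -
      have ey: "e * y = c g * g + (\<Sum>h\<in>G. c h * h) + ky" using insert.hyps by (simp add: ky_def)
      have "e1 * y = (e * e - a g) * (e * y)" by (simp add: e1_def mult.assoc)
      also have "\<dots> = c g * ((e * e - a g) * g) + (e * e - a g) * (\<Sum>h\<in>G. c h * h) + (e * e - a g) * ky"
        by (simp add: ey algebra_simps)
      also have "\<dots> = (c g * (\<Sum>h\<in>G. a h * h) + (e * e - a g) * (\<Sum>h\<in>G. c h * h)) + (c g * (e * k0 + k) + (e * e - a g) * ky)"
        by (subst eq1) (simp add: algebra_simps)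
      moreover have "(\<Sum>h\<in>G. (c g * a h + (e * e - a g) * c h) * h) = c g * (\<Sum>h\<in>G. a h * h) + (e * e - a g) * (\<Sum>h\<in>G. c h * h)"
        by (simp add: distrib_right sum.distrib sum_distrib_left mult.assoc)
      ultimately show ?thesis by (simp only: add_diff_cancel_left')
    qed
    also have "\<dots> \<in> K" using ek c K by (simp add: ideal_add ideal_multL ky_def)
    finally show "\<exists>c. e1 * y - (\<Sum>h\<in>G. c h * h) \<in> K" by (rule exI[where x="\<lambda>h. c g * a h + (e * e - a g) * c h"])
  qed
  ultimately show ?case using insert.IH[of e1] insert.prems(1) by blast
qed

lemma nakayama:
  fixes J K :: "'a::comm_ring_1 set"
  assumes J: "is_ideal J" and K: "is_ideal K"
    and cov: "\<forall>y\<in>J. \<exists>k\<in>K. \<exists>v\<in>ideal_sq J. y = k + v"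
    and G: "finite G" "G \<subseteq> J" "J \<subseteq> ideal_gen G"
  shows "\<exists>s\<in>J. \<forall>y\<in>J. (1 - s) * y \<in> K"
proof -
  have "\<forall>y\<in>J. \<exists>c. 1 * y - (\<Sum>h\<in>G. c h * h) \<in> K"
  proof
    fix y assume "y \<in> J"
    then obtain c where "y = (\<Sum>h\<in>G. c h * h)" using G(3) unfolding ideal_gen_def by auto
    then show "\<exists>c. 1 * y - (\<Sum>h\<in>G. c h * h) \<in> K" using K by (intro exI[of _ c]) (auto simp: ideal_0)
  qed
  then obtain e' where "1 - e' \<in> J" "\<forall>y\<in>J. e' * y \<in> K"
    using nak_induct[OF J K cov G(1,2), of 1] J by (auto simp: ideal_0)
  then show ?thesis by (intro bexI[of _ "1 - e'"]) auto
qed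


section \<open>Modules and duals\<close>

lemma module_mult: "module ((*) :: 'a::comm_ring_1 \<Rightarrow> 'a \<Rightarrow> 'a)"
  by unfold_locales (auto simp: algebra_simps)

lemma dualI:
  assumes "module sc" "\<And>x y. f (x + y) = f x + f y" "\<And>a x. f (sc a x) = a * f x"
  shows "f \<in> dual sc"
  unfolding dual_def module_hom_def module_hom_axioms_def using assms module_mult by auto

lemma dual_hom: "f \<in> dual sc \<Longrightarrow> module_hom sc (*) f"
  by (simp add: dual_def)

lemma dual_module: "f \<in> dual sc \<Longrightarrow> module sc"
  by (simp add: dual_def module_hom_def)

lemma dual_add: "f \<in> dual sc \<Longrightarrow> f (x + y) = f x + f y"
  by (rule module_hom.add[OF dual_hom])
lemma dual_scale: "f \<in> dual sc \<Longrightarrow> f (sc a x) = a * f x"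
  by (rule module_hom.scale[OF dual_hom])
lemma dual_zero: "f \<in> dual sc \<Longrightarrow> f 0 = 0"
  by (rule module_hom.zero[OF dual_hom])
lemma dual_sum: assumes "f \<in> dual sc" shows "f (sum g S) = (\<Sum>x\<in>S. f (g x))"
  by (induction S rule: infinite_finite_induct) (simp_all add: dual_zero[OF assms] dual_add[OF assms])
lemma dual_minus: "f \<in> dual sc \<Longrightarrow> f (- x) = - f x"
  by (metis add.right_inverse add_eq_0_iff2 dual_add dual_zero)
lemma dual_diff: "f \<in> dual sc \<Longrightarrow> f (x - y) = f x - f y"
  by (metis diff_conv_add_uminus dual_add dual_minus)

lemma range_dual_ideal: assumes "f \<in> dual sc" shows "is_ideal (range f)"
  unfolding is_ideal_def
proof (intro conjI ballI allI)
  show "0 \<in> range f" using dual_zero[OF assms] by (metis rangeI)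
  show "x + y \<in> range f" if xy: "x \<in> range f" "y \<in> range f" for x y
  proof -
    obtain u v where "x = f u" "y = f v" using xy by blast
    then have "x + y = f (u + v)" by (simp add: dual_add[OF assms])
    then show ?thesis by simp
  qed
  show "a * x \<in> range f" if xy: "x \<in> range f" for a x
  proof -
    obtain u where "x = f u" using xy by blast
    then have "a * x = f (sc a u)" by (simp add: dual_scale[OF assms])
    then show ?thesis by simp
  qed
qed

lemma mod_scale_zero_left: "module sc \<Longrightarrow> sc 0 x = 0"
  by (rule module.scale_zero_left)
lemma mod_scale_zero_right: "module sc \<Longrightarrow> sc a 0 = 0"
  by (rule module.scale_zero_right)
lemma mod_scale_sum_right: "module sc \<Longrightarrow> sc a (sum f S) = (\<Sum>x\<in>S. sc a (f x))"
  by (rule module.scale_sum_right)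
lemma mod_scale_sum_left: "module sc \<Longrightarrow> sc (sum f S) x = (\<Sum>i\<in>S. sc (f i) x)"
  by (rule module.scale_sum_left)
lemma mod_scale_left_distrib: "module sc \<Longrightarrow> sc (a + b) x = sc a x + sc b x"
  by (rule module.scale_left_distrib)
lemma mod_scale_right_distrib: "module sc \<Longrightarrow> sc a (x + y) = sc a x + sc a y"
  by (rule module.scale_right_distrib)
lemma mod_scale_scale: "module sc \<Longrightarrow> sc a (sc b x) = sc (a * b) x"
  by (rule module.scale_scale)
lemma mod_scale_one: "module sc \<Longrightarrow> sc 1 x = x"
  by (rule module.scale_one)

section \<open>Polynomial scaling\<close>

lemma sum_if_eq_delta: "(\<Sum>j\<le>d. if i + j = (n::nat) then X j else 0) = (if i \<le> n \<and> n - i \<le> d then X (n - i) else 0)"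
proof -
  have "(\<Sum>j\<le>d. if i + j = n then X j else 0) = (\<Sum>j\<le>d. if j = n - i then (if i \<le> n then X j else 0) else 0)"
    by (rule sum.cong) auto
  also have "\<dots> = (if n - i \<le> d then (if i \<le> n then X (n - i) else 0) else 0)"
    by (subst sum.delta) auto
  finally show ?thesis by auto
qed

lemma coeff_pscale:
  assumes m: "module sc"
  shows "coeff (pscale sc a p) n = (\<Sum>i\<le>n. sc (coeff a i) (coeff p (n - i)))"
proof -
  have "coeff (pscale sc a p) n = (\<Sum>i\<le>degree a. \<Sum>j\<le>degree p. if i + j = n then sc (coeff a i) (coeff p j) else 0)"
    unfolding pscale_def coeff_sum coeff_monom by (auto intro!: sum.cong)
  also have "\<dots> = (\<Sum>i\<le>degree a. if i \<le> n \<and> n - i \<le> degree p then sc (coeff a i) (coeff p (n - i)) else 0)"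
    by (simp only: sum_if_eq_delta)
  also have "\<dots> = (\<Sum>i\<le>degree a. if i \<le> n then sc (coeff a i) (coeff p (n - i)) else 0)"
    by (intro sum.cong refl) (auto simp: coeff_eq_0 mod_scale_zero_right[OF m])
  also have "\<dots> = (\<Sum>i\<in>{i\<in>{..degree a}. i \<le> n}. sc (coeff a i) (coeff p (n - i)))"
    by (rule sym, rule sum.inter_filter) simp
  also have "\<dots> = (\<Sum>i\<le>n. sc (coeff a i) (coeff p (n - i)))"
    by (rule sum.mono_neutral_left) (auto simp: coeff_eq_0 mod_scale_zero_left[OF m] intro: ccontr)
  finally show ?thesis .
qed

lemma pscale_add_right: "module sc \<Longrightarrow> pscale sc a (p + q) = pscale sc a p + pscale sc a q"
  by (rule poly_eqI) (simp add: coeff_pscale mod_scale_right_distrib sum.distrib)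

lemma pscale_add_left: "module sc \<Longrightarrow> pscale sc (a + b) p = pscale sc a p + pscale sc b p"
  by (rule poly_eqI) (simp add: coeff_pscale mod_scale_left_distrib sum.distrib)

lemma coeff_pscale_const: "module sc \<Longrightarrow> coeff (pscale sc [:c:] p) n = sc c (coeff p n)"
proof -
  assume m: "module sc"
  have "(\<Sum>i\<le>n. sc (coeff [:c:] i) (coeff p (n - i))) = (\<Sum>i\<le>n. if i = 0 then sc c (coeff p n) else 0)"
    by (intro sum.cong refl) (auto simp: coeff_pCons split: nat.split simp: mod_scale_zero_left[OF m])
  then show ?thesis by (simp add: coeff_pscale[OF m])
qed

lemma pscale_const_const: "module sc \<Longrightarrow> pscale sc [:c:] [:q:] = [:sc c q:]"
  by (rule poly_eqI) (auto simp: coeff_pscale_const coeff_pCons mod_scale_zero_right split: nat.split)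

lemma pscale_smult: "module sc \<Longrightarrow> pscale sc (smult c b) p = pscale sc [:c:] (pscale sc b p)"
proof (rule poly_eqI)
  fix n assume m: "module sc"
  show "coeff (pscale sc (smult c b) p) n = coeff (pscale sc [:c:] (pscale sc b p)) n"
    unfolding coeff_pscale_const[OF m] by (simp add: coeff_pscale[OF m] mod_scale_sum_right[OF m] mod_scale_scale[OF m])
qed

lemma pscale_pCons0: "module sc \<Longrightarrow> pscale sc (pCons 0 a) p = pCons 0 (pscale sc a p)"
proof (rule poly_eqI)
  fix n assume m: "module sc"
  show "coeff (pscale sc (pCons 0 a) p) n = coeff (pCons 0 (pscale sc a p)) n"
  proof (cases n)
    case 0 then show ?thesis by (simp add: coeff_pscale[OF m] mod_scale_zero_left[OF m])
  next
    case (Suc k)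
    have "coeff (pscale sc (pCons 0 a) p) n = (\<Sum>i\<le>Suc k. sc (coeff (pCons 0 a) i) (coeff p (Suc k - i)))"
      by (simp add: coeff_pscale[OF m] Suc)
    also have "\<dots> = (\<Sum>i\<le>k. sc (coeff a i) (coeff p (k - i)))"
      by (subst sum.atMost_Suc_shift) (simp add: mod_scale_zero_left[OF m])
    finally show ?thesis by (simp add: Suc coeff_pscale[OF m])
  qed
qed

lemma pscale_pCons: "module sc \<Longrightarrow> pscale sc (pCons c a) p = pscale sc [:c:] p + pCons 0 (pscale sc a p)"
proof -
  assume m: "module sc"
  have "pCons c a = [:c:] + pCons 0 a" by simp
  then show ?thesis by (metis pscale_add_left[OF m] pscale_pCons0[OF m])
qed

lemma pscale_zero_left: "module sc \<Longrightarrow> pscale sc 0 p = 0"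
  by (rule poly_eqI) (simp add: coeff_pscale mod_scale_zero_left)

lemma pscale_scale: fixes sc :: "'a::comm_ring_1 \<Rightarrow> 'b::ab_group_add \<Rightarrow> 'b"
  assumes m: "module sc" shows "pscale sc a (pscale sc b p) = pscale sc (a * b) p"
proof (induction a rule: pCons_induct)
  show "pscale sc 0 (pscale sc b p) = pscale sc (0 * b) p" by (simp add: pscale_zero_left[OF m])
next
  fix c :: 'a and a :: "'a poly" assume _: "c \<noteq> 0 \<or> a \<noteq> 0" and IH: "pscale sc a (pscale sc b p) = pscale sc (a * b) p"
  have "pscale sc (pCons c a) (pscale sc b p) = pscale sc [:c:] (pscale sc b p) + pCons 0 (pscale sc (a * b) p)"
    by (subst pscale_pCons[OF m]) (simp only: IH)
  also have "\<dots> = pscale sc (smult c b) p + pscale sc (pCons 0 (a * b)) p"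
    by (simp add: pscale_smult[OF m] pscale_pCons0[OF m])
  also have "\<dots> = pscale sc (pCons c a * b) p"
    by (simp add: mult_pCons_left pscale_add_left[OF m])
  finally show "pscale sc (pCons c a) (pscale sc b p) = pscale sc (pCons c a * b) p" .
qed

lemma pscale_one: assumes m: "module sc" shows "pscale sc 1 p = p"
proof -
  have "pscale sc [:1:] p = p" by (rule poly_eqI) (simp add: coeff_pscale_const[OF m] mod_scale_one[OF m])
  then show ?thesis by (metis one_pCons)
qed

lemma module_pscale: assumes m: "module sc" shows "module (pscale sc)"
proof (unfold_locales)
  show "pscale sc a (x + y) = pscale sc a x + pscale sc a y" for a x y by (rule pscale_add_right[OF m])
  show "pscale sc (a + b) x = pscale sc a x + pscale sc b x" for a b x by (rule pscale_add_left[OF m])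
  show "pscale sc a (pscale sc b x) = pscale sc (a * b) x" for a b x by (rule pscale_scale[OF m])
  show "pscale sc 1 x = x" for x by (rule pscale_one[OF m])
qed

definition pext :: "('b::zero \<Rightarrow> 'a::comm_monoid_add) \<Rightarrow> 'b poly \<Rightarrow> 'a poly" where
  "pext f Q = (\<Sum>j\<le>degree Q. monom (f (coeff Q j)) j)"

lemma coeff_pext: "f 0 = 0 \<Longrightarrow> coeff (pext f Q) n = f (coeff Q n)"
  unfolding pext_def coeff_sum coeff_monom
  by (cases "n \<le> degree Q") (auto simp: coeff_eq_0 sum.delta)

lemma pext_dual: assumes f: "f \<in> dual sc" shows "pext f \<in> dual (pscale sc)"
proof -
  have m: "module sc" using dual_module[OF f] .
  have z: "f 0 = 0" using dual_zero[OF f] .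
  show ?thesis
  proof (rule dualI[OF module_pscale[OF m]])
    show "pext f (x + y) = pext f x + pext f y" for x y
      by (rule poly_eqI) (simp add: coeff_pext[of f, OF z] dual_add[OF f])
    show "pext f (pscale sc a x) = a * pext f x" for a x
      by (rule poly_eqI) (simp add: coeff_pext[of f, OF z] coeff_pscale[OF m] coeff_mult dual_sum[OF f] dual_scale[OF f])
  qed
qed

lemma pext_const: "f 0 = 0 \<Longrightarrow> pext f [:q:] = [:f q:]"
  by (rule poly_eqI) (simp add: coeff_pext coeff_pCons split: nat.split)

lemma spec_dual_pext: "f \<in> dual sc \<Longrightarrow> spec_dual t (pext f) = f"
  by (rule ext) (simp add: spec_dual_def pext_const dual_zero)

lemma range_pext: assumes f: "f \<in> dual sc" and Q: "\<forall>j. coeff Q j \<in> range f"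
  shows "Q \<in> range (pext f)"
proof -
  define g where "g j = (SOME x. f x = coeff Q j)" for j
  have g: "f (g j) = coeff Q j" for j
    unfolding g_def by (rule someI_ex) (use Q[rule_format, of j] in \<open>auto simp: image_iff eq_commute\<close>)
  define P where "P = (\<Sum>j\<le>degree Q. monom (g j) j)"
  have "coeff P j = (if j \<le> degree Q then g j else 0)" for j
    by (simp add: P_def coeff_sum coeff_monom sum.delta)
  then have "pext f P = Q"
    by (intro poly_eqI) (auto simp: coeff_pext dual_zero[OF f] g coeff_eq_0)
  then show ?thesis by (metis rangeI)
qed

lemma peval_le: assumes m: "module sc" and d: "degree Q \<le> n"
  shows "peval sc t Q = (\<Sum>j\<le>n. sc (t ^ j) (coeff Q j))"
  unfolding peval_def
  by (rule sum.mono_neutral_left) (use d in \<open>auto simp: coeff_eq_0 mod_scale_zero_right[OF m]\<close>)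

lemma monom_pscale: "module sc \<Longrightarrow> monom q j = pscale sc (monom 1 j) [:q:]"
proof (rule poly_eqI)
  fix n assume m: "module sc"
  have "(\<Sum>i\<le>n. sc (coeff (monom 1 j) i) (coeff [:q:] (n - i))) = (\<Sum>i\<le>n. if i = j then (if n = j then q else 0) else 0)"
    by (intro sum.cong refl) (auto simp: coeff_monom coeff_pCons mod_scale_zero_left[OF m] mod_scale_one[OF m] mod_scale_zero_right[OF m] split: nat.split)
  then show "coeff (monom q j) n = coeff (pscale sc (monom 1 j) [:q:]) n"
    by (simp add: coeff_pscale[OF m] coeff_monom sum.delta)
qed

lemma const_sum: "[:sum f S:] = (\<Sum>x\<in>S. [:f x:])"
  by (rule poly_eqI) (simp add: coeff_sum coeff_pCons split: nat.split)

lemma poly_dual_eval: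
  assumes F: "F \<in> dual (pscale sc)" and m: "module sc"
  shows "poly (F Q) t = spec_dual t F (peval sc t Q)"
proof -
  have "F Q = F (\<Sum>j\<le>degree Q. pscale sc (monom 1 j) [:coeff Q j:])"
    by (simp add: monom_pscale[OF m, symmetric] poly_as_sum_of_monoms)
  also have "\<dots> = (\<Sum>j\<le>degree Q. monom 1 j * F [:coeff Q j:])"
    by (simp add: dual_sum[OF F] dual_scale[OF F])
  finally have 1: "poly (F Q) t = (\<Sum>j\<le>degree Q. t ^ j * poly (F [:coeff Q j:]) t)"
    by (simp add: poly_sum poly_monom)
  have "spec_dual t F (peval sc t Q) = poly (F (\<Sum>j\<le>degree Q. pscale sc [:t ^ j:] [:coeff Q j:])) t"
    by (simp add: spec_dual_def peval_def const_sum pscale_const_const[OF m])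
  also have "\<dots> = (\<Sum>j\<le>degree Q. t ^ j * poly (F [:coeff Q j:]) t)"
    by (simp add: dual_sum[OF F] dual_scale[OF F] poly_sum)
  finally show ?thesis using 1 by simp
qed


section \<open>Hilbert basis theorem\<close>

lemma noeth_fg: "noetherian_ring TYPE('a::comm_ring_1) \<Longrightarrow> is_ideal (I::'a set) \<Longrightarrow> \<exists>F. finite F \<and> F \<subseteq> I \<and> I = ideal_gen F"
  unfolding noetherian_ring_def by blast

lemma ideal_gen_sum: "(\<And>i. i \<in> S \<Longrightarrow> f i \<in> ideal_gen G) \<Longrightarrow> sum f S \<in> ideal_gen G"
  by (rule ideal_sum[OF ideal_gen_ideal])

theorem hilbert_basis:
  assumes N: "noetherian_ring TYPE('a::comm_ring_1)"
  shows "noetherian_ring TYPE('a poly)"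
  unfolding noetherian_ring_def
proof (intro allI impI)
  fix J :: "'a poly set" assume J: "is_ideal J"
  define L where "L n = {a. \<exists>g\<in>J. degree g \<le> n \<and> coeff g n = a}" for n
  have L_ideal: "is_ideal (L n)" for n
    unfolding is_ideal_def
  proof (intro conjI ballI allI)
    show "0 \<in> L n" unfolding L_def using ideal_0[OF J] by (auto intro!: bexI[of _ 0])
    show "x + y \<in> L n" if xy: "x \<in> L n" "y \<in> L n" for x y
    proof -
      obtain g h where "g \<in> J" "degree g \<le> n" "coeff g n = x" "h \<in> J" "degree h \<le> n" "coeff h n = y"
        using xy unfolding L_def by blast
      then show ?thesis unfolding L_def
        by (auto intro!: bexI[of _ "g + h"] ideal_add[OF J] degree_add_le)
    qed
    show "a * x \<in> L n" if xy: "x \<in> L n" for a x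
    proof -
      obtain g where "g \<in> J" "degree g \<le> n" "coeff g n = x"
        using xy unfolding L_def by blast
      then show ?thesis unfolding L_def
        by (auto intro!: bexI[of _ "[:a:] * g"] ideal_multL[OF J] order.trans[OF degree_mult_le])
    qed
  qed
  have L_Suc: "L n \<subseteq> L (Suc n)" for n
  proof
    fix a assume "a \<in> L n"
    then obtain g where "g \<in> J" "degree g \<le> n" "coeff g n = a" unfolding L_def by blast
    moreover have "pCons 0 g = monom 1 1 * g" by (simp add: monom_Suc)
    moreover have "degree (pCons 0 g) \<le> Suc n" using \<open>degree g \<le> n\<close> degree_pCons_le[of 0 g] by linarith
    moreover have "pCons 0 g \<in> J" using \<open>g \<in> J\<close> \<open>pCons 0 g = monom 1 1 * g\<close> ideal_multL[OF J] by metis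
    moreover have "coeff (pCons 0 g) (Suc n) = a" using \<open>coeff g n = a\<close> by simp
    ultimately show "a \<in> L (Suc n)" unfolding L_def by blast
  qed
  have L_mono: "m \<le> n \<Longrightarrow> L m \<subseteq> L n" for m n
    by (rule lift_Suc_mono_le[of L]) (use L_Suc in auto)
  define Lu where "Lu = (\<Union>n. L n)"
  have Lu_ideal: "is_ideal Lu"
    unfolding is_ideal_def
  proof (intro conjI ballI allI)
    show "0 \<in> Lu" unfolding Lu_def using ideal_0[OF L_ideal] by blast
    show "x + y \<in> Lu" if xy: "x \<in> Lu" "y \<in> Lu" for x y
    proof -
      obtain m k where "x \<in> L m" "y \<in> L k" using xy unfolding Lu_def by blast
      then have "x \<in> L (max m k)" "y \<in> L (max m k)" using L_mono[of m "max m k"] L_mono[of k "max m k"] by auto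
      then show ?thesis unfolding Lu_def using ideal_add[OF L_ideal] by blast
    qed
    show "a * x \<in> Lu" if "x \<in> Lu" for a x
      using that ideal_multL[OF L_ideal] unfolding Lu_def by blast
  qed
  obtain Fu where Fu: "finite Fu" "Fu \<subseteq> Lu" "Lu = ideal_gen Fu" using noeth_fg[OF N Lu_ideal] by blast
  have "\<forall>x\<in>Fu. \<exists>n. x \<in> L n" using Fu(2) unfolding Lu_def by blast
  then obtain nx where nx: "\<And>x. x \<in> Fu \<Longrightarrow> x \<in> L (nx x)" by metis
  define N0 where "N0 = Max (nx ` Fu)"
  have "Fu \<subseteq> L N0"
  proof
    fix x assume x: "x \<in> Fu"
    then have "nx x \<le> N0" unfolding N0_def using Fu(1) by auto
    then show "x \<in> L N0" using L_mono nx[OF x] by blast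
  qed
  then have LN0: "L n \<subseteq> L N0" for n
    using ideal_gen_least[OF L_ideal] Fu(3) unfolding Lu_def by blast
  have "\<forall>n. \<exists>F. finite F \<and> F \<subseteq> L n \<and> L n = ideal_gen F" using noeth_fg[OF N L_ideal] by blast
  then obtain Fn where Fn: "\<And>n. finite (Fn n)" "\<And>n. Fn n \<subseteq> L n" "\<And>n. L n = ideal_gen (Fn n)" by metis
  define h where "h n b = (SOME g. g \<in> J \<and> degree g \<le> n \<and> coeff g n = b)" for n b
  have h: "h n b \<in> J \<and> degree (h n b) \<le> n \<and> coeff (h n b) n = b" if "b \<in> L n" for n b
    unfolding h_def by (rule someI_ex) (use that in \<open>auto simp: L_def\<close>)
  define G where "G = (\<Union>n\<le>N0. h n ` Fn n)"
  have G_fin: "finite G" unfolding G_def using Fn(1) by auto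
  have G_J: "G \<subseteq> J" unfolding G_def using h Fn(2) by blast
  have main: "\<forall>g\<in>J. (\<forall>i\<ge>k. coeff g i = 0) \<longrightarrow> g \<in> ideal_gen G" for k
  proof (induction k)
    case 0
    have "g = 0" if "\<forall>i\<ge>0. coeff g i = 0" for g :: "'a poly" using that by (intro poly_eqI) auto
    then show ?case using ideal_gen_0 by auto
  next
    case (Suc k)
    show ?case
    proof (intro ballI impI)
      fix g assume gJ: "g \<in> J" and gc: "\<forall>i\<ge>Suc k. coeff g i = 0"
      define a where "a = coeff g k"
      have "degree g \<le> k" using gc by (intro degree_le) auto
      then have aLk: "a \<in> L k" unfolding L_def a_def using gJ by blast
      define m where "m = min k N0"
      have mN: "m \<le> N0" "m \<le> k" unfolding m_def by auto
      have "a \<in> L m"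
      proof (cases "k \<le> N0")
        case True then show ?thesis using aLk by (simp add: m_def)
      next
        case False then show ?thesis using aLk LN0 by (auto simp: m_def)
      qed
      then have "a \<in> ideal_gen (Fn m)" using Fn(3)[of m] by simp
      then obtain c where c: "a = (\<Sum>b\<in>Fn m. c b * b)" unfolding ideal_gen_iff by blast
      define hh where "hh = (\<Sum>b\<in>Fn m. monom (c b) (k - m) * h m b)"
      have hb: "h m b \<in> J" "degree (h m b) \<le> m" "coeff (h m b) m = b" if "b \<in> Fn m" for b
        using h[of b m] Fn(2) that by auto
      have hG: "h m b \<in> G" if "b \<in> Fn m" for b unfolding G_def using mN that by blast
      have hh_G: "hh \<in> ideal_gen G" unfolding hh_def
        by (intro ideal_gen_sum ideal_gen_mult ideal_gen_base[OF G_fin] hG)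
      have hh_J: "hh \<in> J" unfolding hh_def
        by (intro ideal_sum[OF J] ideal_multL[OF J] hb)
      have hh_hi: "coeff hh i = 0" if "i > k" for i
      proof -
        have "coeff (monom (c b) (k - m) * h m b) i = 0" if b: "b \<in> Fn m" for b
        proof -
          have "i - (k - m) > m" using \<open>i > k\<close> mN by auto
          then have "coeff (h m b) (i - (k - m)) = 0" using hb(2)[OF b] by (intro coeff_eq_0) auto
          then show ?thesis by (simp add: coeff_monom_mult)
        qed
        then show ?thesis unfolding hh_def coeff_sum by simp
      qed
      have hh_k: "coeff hh k = a"
      proof -
        have "coeff (monom (c b) (k - m) * h m b) k = c b * b" if b: "b \<in> Fn m" for b
          using hb(3)[OF b] mN by (simp add: coeff_monom_mult)
        then show ?thesis unfolding hh_def coeff_sum c by simp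
      qed
      have "g - hh \<in> ideal_gen G"
      proof -
        have "g - hh \<in> J" using gJ hh_J J by (simp add: ideal_diff)
        moreover have "\<forall>i\<ge>k. coeff (g - hh) i = 0"
        proof (intro allI impI)
          fix i assume "k \<le> i"
          then show "coeff (g - hh) i = 0"
            using gc hh_hi hh_k unfolding a_def by (cases "i = k") auto
        qed
        ultimately show ?thesis using Suc.IH by blast
      qed
      then have "(g - hh) + hh \<in> ideal_gen G" using hh_G ideal_gen_add by blast
      then show "g \<in> ideal_gen G" by simp
    qed
  qed
  have "J \<subseteq> ideal_gen G"
  proof
    fix g assume "g \<in> J"
    moreover have "\<forall>i\<ge>Suc (degree g). coeff g i = 0" by (auto intro: coeff_eq_0)
    ultimately show "g \<in> ideal_gen G" using main by blast
  qed
  moreover have "ideal_gen G \<subseteq> J" by (rule ideal_gen_least[OF J G_J])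
  ultimately show "\<exists>F. finite F \<and> F \<subseteq> J \<and> J = ideal_gen F" using G_fin G_J by blast
qed


lemma coeff_pscale_constR: "module sc \<Longrightarrow> coeff (pscale sc a [:x:]) n = sc (coeff a n) x"
proof -
  assume m: "module sc"
  have "(\<Sum>i\<le>n. sc (coeff a i) (coeff [:x:] (n - i))) = (\<Sum>i\<le>n. if i = n then sc (coeff a n) x else 0)"
    by (intro sum.cong refl) (auto simp: coeff_pCons mod_scale_zero_right[OF m] split: nat.split)
  then show ?thesis by (simp add: coeff_pscale[OF m])
qed

lemma degree0_const: "degree (X::'a::zero poly) = 0 \<Longrightarrow> X = [:coeff X 0:]"
  by (rule poly_eqI) (auto simp: coeff_pCons coeff_eq_0 split: nat.split)

lemma zero_dual: "module sc \<Longrightarrow> (\<lambda>_. 0) \<in> dual sc"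
  by (rule dualI) auto

theorem projective_pscale:
  fixes sc :: "'a::comm_ring_1 \<Rightarrow> 'b::ab_group_add \<Rightarrow> 'b"
  assumes P: "projective_module sc"
  shows "projective_module (pscale sc)"
proof -
  have m: "module sc" using P by (simp add: projective_module_def)
  obtain \<phi> :: "'b \<Rightarrow> 'b \<Rightarrow> 'a" where \<phi>: "\<And>x. \<phi> x \<in> dual sc"
    "\<And>p. finite {x. \<phi> x p \<noteq> 0}" "\<And>p. p = (\<Sum>x\<in>{x. \<phi> x p \<noteq> 0}. sc (\<phi> x p) x)"
    using P unfolding projective_module_def by blast
  define \<Phi> :: "'b poly \<Rightarrow> 'b poly \<Rightarrow> 'a poly" where
    "\<Phi> X Q = (if degree X = 0 then pext (\<phi> (coeff X 0)) Q else 0)" for X Q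
  have \<Phi>_dual: "\<Phi> X \<in> dual (pscale sc)" for X
  proof (cases "degree X = 0")
    case True
    then have "\<Phi> X = pext (\<phi> (coeff X 0))" by (auto simp: \<Phi>_def)
    then show ?thesis using pext_dual[OF \<phi>(1)] by simp
  next
    case False
    then have "\<Phi> X = (\<lambda>_. 0)" by (auto simp: \<Phi>_def)
    then show ?thesis using zero_dual[OF module_pscale[OF m]] by simp
  qed
  have z: "\<phi> x 0 = 0" for x using dual_zero[OF \<phi>(1)] .
  have rest: "finite {X. \<Phi> X Q \<noteq> 0} \<and> Q = (\<Sum>X\<in>{X. \<Phi> X Q \<noteq> 0}. pscale sc (\<Phi> X Q) X)" for Q
  proof -
    define T where "T = {x. pext (\<phi> x) Q \<noteq> 0}"
    have T_sub: "T \<subseteq> (\<Union>j\<le>degree Q. {x. \<phi> x (coeff Q j) \<noteq> 0})"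
    proof
      fix x assume "x \<in> T"
      then have "pext (\<phi> x) Q \<noteq> 0" unfolding T_def by simp
      then obtain j where j: "coeff (pext (\<phi> x) Q) j \<noteq> 0"
        by (intro that[of "degree (pext (\<phi> x) Q)"]) simp
      then have nz: "\<phi> x (coeff Q j) \<noteq> 0" by (simp add: coeff_pext[of "\<phi> x", OF z])
      have "j \<le> degree Q"
      proof (rule ccontr)
        assume "\<not> j \<le> degree Q"
        then have "coeff Q j = 0" by (simp add: coeff_eq_0)
        then show False using nz z by simp
      qed
      moreover note nz
      ultimately show "x \<in> (\<Union>j\<le>degree Q. {x. \<phi> x (coeff Q j) \<noteq> 0})" by blast
    qed
    have T_fin: "finite T" by (rule finite_subset[OF T_sub]) (use \<phi>(2) in auto)
    have S_eq: "{X. \<Phi> X Q \<noteq> 0} = (\<lambda>x. [:x:]) ` T"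
    proof
      show "{X. \<Phi> X Q \<noteq> 0} \<subseteq> (\<lambda>x. [:x:]) ` T"
      proof
        fix X assume "X \<in> {X. \<Phi> X Q \<noteq> 0}"
        then have "degree X = 0" "pext (\<phi> (coeff X 0)) Q \<noteq> 0" by (auto simp: \<Phi>_def split: if_splits)
        then show "X \<in> (\<lambda>x. [:x:]) ` T" unfolding T_def using degree0_const by blast
      qed
      show "(\<lambda>x. [:x:]) ` T \<subseteq> {X. \<Phi> X Q \<noteq> 0}" unfolding T_def \<Phi>_def by auto
    qed
    have inj: "inj_on (\<lambda>x. [:x:]) T" by (auto simp: inj_on_def)
    have "(\<Sum>X\<in>{X. \<Phi> X Q \<noteq> 0}. pscale sc (\<Phi> X Q) X) = (\<Sum>x\<in>T. pscale sc (pext (\<phi> x) Q) [:x:])"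
      unfolding S_eq by (subst sum.reindex[OF inj]) (simp add: \<Phi>_def)
    also have "\<dots> = Q"
    proof (rule poly_eqI)
      fix n
      have "coeff (\<Sum>x\<in>T. pscale sc (pext (\<phi> x) Q) [:x:]) n = (\<Sum>x\<in>T. sc (\<phi> x (coeff Q n)) x)"
        by (simp add: coeff_sum coeff_pscale_constR[OF m] coeff_pext[of "\<phi> _", OF z])
      also have "\<dots> = (\<Sum>x\<in>{x. \<phi> x (coeff Q n) \<noteq> 0}. sc (\<phi> x (coeff Q n)) x)"
      proof (rule sum.mono_neutral_right[OF T_fin])
        show "{x. \<phi> x (coeff Q n) \<noteq> 0} \<subseteq> T"
        proof
          fix x assume "x \<in> {x. \<phi> x (coeff Q n) \<noteq> 0}"
          then have "coeff (pext (\<phi> x) Q) n \<noteq> 0" by (simp add: coeff_pext[of "\<phi> x", OF z])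
          then show "x \<in> T" unfolding T_def by auto
        qed
        show "\<forall>x\<in>T - {x. \<phi> x (coeff Q n) \<noteq> 0}. sc (\<phi> x (coeff Q n)) x = 0"
          by (auto simp: mod_scale_zero_left[OF m])
      qed
      also have "\<dots> = coeff Q n" using \<phi>(3)[of "coeff Q n"] by simp
      finally show "coeff (\<Sum>x\<in>T. pscale sc (pext (\<phi> x) Q) [:x:]) n = coeff Q n" .
    qed
    finally show ?thesis using S_eq T_fin by simp
  qed
  show ?thesis unfolding projective_module_def
    by (intro conjI module_pscale[OF m] exI[of _ \<Phi>] allI \<Phi>_dual) (use rest in auto)
qed


section \<open>Local orientations\<close>

lemma LO_D:
  assumes "(I, \<omega>) \<in> LO sc"
  shows "is_ideal I" "\<omega> p \<in> quot_sq I"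
    "x \<in> \<omega> p \<Longrightarrow> y \<in> \<omega> q \<Longrightarrow> x + y \<in> \<omega> (p + q)"
    "x \<in> \<omega> p \<Longrightarrow> a * x \<in> \<omega> (sc a p)"
    "x \<in> I \<Longrightarrow> \<exists>p. x \<in> \<omega> p"
  using assms unfolding LO_def by auto

lemma coset_eq:
  assumes I: "is_ideal I" and C: "C \<in> quot_sq I" and u: "u \<in> C"
  shows "C = (+) u ` ideal_sq I"
proof -
  obtain x where x: "x \<in> I" "C = (+) x ` ideal_sq I" using C unfolding quot_sq_def by blast
  obtain e where e: "e \<in> ideal_sq I" "u = x + e" using u x by blast
  have sq: "is_ideal (ideal_sq I)" using ideal_sq_ideal[OF I] .
  show ?thesis
  proof
    show "C \<subseteq> (+) u ` ideal_sq I"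
    proof
      fix y assume "y \<in> C"
      then obtain e' where "e' \<in> ideal_sq I" "y = x + e'" using x by blast
      then have "y = u + (e' - e)" "e' - e \<in> ideal_sq I" using e ideal_diff[OF sq] by auto
      then show "y \<in> (+) u ` ideal_sq I" by blast
    qed
    show "(+) u ` ideal_sq I \<subseteq> C"
    proof
      fix y assume "y \<in> (+) u ` ideal_sq I"
      then obtain e' where "e' \<in> ideal_sq I" "y = u + e'" by blast
      then have "y = x + (e + e')" "e + e' \<in> ideal_sq I" using e ideal_add[OF sq] by auto
      then show "y \<in> C" using x by blast
    qed
  qed
qed

lemma coset_mem_diff:
  assumes I: "is_ideal I" and C: "C \<in> quot_sq I" and u: "u \<in> C" and v: "v \<in> C"
  shows "v - u \<in> ideal_sq I"
proof -
  have "C = (+) u ` ideal_sq I" by (rule coset_eq[OF I C u])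
  then obtain e where "e \<in> ideal_sq I" "v = u + e" using v by blast
  then show ?thesis by simp
qed

lemma coset_sub:
  assumes I: "is_ideal I" and C: "C \<in> quot_sq I" and u: "u \<in> C"
  shows "u \<in> I"
proof -
  obtain x where x: "x \<in> I" "C = (+) x ` ideal_sq I" using C unfolding quot_sq_def by blast
  then obtain e where "e \<in> ideal_sq I" "u = x + e" using u by blast
  then show ?thesis using x ideal_sq_subset[OF I] ideal_add[OF I] by auto
qed

lemma coset_nonempty:
  assumes I: "is_ideal I" and C: "C \<in> quot_sq I"
  shows "\<exists>u. u \<in> C"
  using C ideal_sq_0 unfolding quot_sq_def by blast

lemma LO_sum:
  assumes L: "(I, \<omega>) \<in> LO sc" and m: "module sc" and r: "\<And>x. r x \<in> \<omega> x"
  shows "(\<Sum>x\<in>S. c x * r x) \<in> \<omega> (\<Sum>x\<in>S. sc (c x) x)"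
proof (induction S rule: infinite_finite_induct)
  case (infinite A)
  obtain u where "u \<in> \<omega> 0" using coset_nonempty[OF LO_D(1,2)[OF L]] by blast
  then have "0 * u \<in> \<omega> (sc 0 0)" by (rule LO_D(4)[OF L])
  then show ?case using infinite by (simp add: mod_scale_zero_left[OF m])
next
  case empty
  obtain u where "u \<in> \<omega> 0" using coset_nonempty[OF LO_D(1,2)[OF L]] by blast
  then have "0 * u \<in> \<omega> (sc 0 0)" by (rule LO_D(4)[OF L])
  then show ?case by (simp add: mod_scale_zero_left[OF m])
next
  case (insert x F)
  have "c x * r x \<in> \<omega> (sc (c x) x)" by (rule LO_D(4)[OF L r])
  then show ?case using insert LO_D(3)[OF L] by simp
qed

lemma lift_exists:
  assumes P: "projective_module sc" and L: "(I, \<omega>) \<in> LO sc"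
  shows "\<exists>f\<in>dual sc. \<forall>p. f p \<in> \<omega> p"
proof -
  have m: "module sc" using P by (simp add: projective_module_def)
  obtain \<phi> where \<phi>: "\<And>x. \<phi> x \<in> dual sc"
    "\<And>p. finite {x. \<phi> x p \<noteq> 0}" "\<And>p. p = (\<Sum>x\<in>{x. \<phi> x p \<noteq> 0}. sc (\<phi> x p) x)"
    using P unfolding projective_module_def by blast
  define r where "r x = (SOME u. u \<in> \<omega> x)" for x
  have r: "r x \<in> \<omega> x" for x
    unfolding r_def by (rule someI_ex) (rule coset_nonempty[OF LO_D(1,2)[OF L]])
  define S where "S p = {x. \<phi> x p \<noteq> 0}" for p
  define f where "f p = (\<Sum>x\<in>S p. \<phi> x p * r x)" for p
  have f_any: "f p = (\<Sum>x\<in>T. \<phi> x p * r x)" if "finite T" "S p \<subseteq> T" for p T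
    unfolding f_def by (rule sum.mono_neutral_left) (use that in \<open>auto simp: S_def\<close>)
  have Sfin: "finite (S p)" for p using \<phi>(2) by (simp add: S_def)
  have "f \<in> dual sc"
  proof (rule dualI[OF m])
    fix p q
    let ?T = "S p \<union> S q \<union> S (p + q)"
    have fin: "finite ?T" using Sfin by auto
    have "f (p + q) = (\<Sum>x\<in>?T. \<phi> x (p + q) * r x)" by (rule f_any) (use fin in auto)
    also have "\<dots> = (\<Sum>x\<in>?T. \<phi> x p * r x) + (\<Sum>x\<in>?T. \<phi> x q * r x)"
      by (simp add: dual_add[OF \<phi>(1)] distrib_right sum.distrib)
    also have "\<dots> = f p + f q"
    proof -
      have "f p = (\<Sum>x\<in>?T. \<phi> x p * r x)" by (rule f_any[OF fin]) auto
      moreover have "f q = (\<Sum>x\<in>?T. \<phi> x q * r x)" by (rule f_any[OF fin]) auto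
      ultimately show ?thesis by simp
    qed
    finally show "f (p + q) = f p + f q" .
  next
    fix a p
    have sub: "S (sc a p) \<subseteq> S p" unfolding S_def by (auto simp: dual_scale[OF \<phi>(1)])
    have "f (sc a p) = (\<Sum>x\<in>S p. \<phi> x (sc a p) * r x)" by (rule f_any[OF Sfin sub])
    also have "\<dots> = a * f p" by (simp add: f_def dual_scale[OF \<phi>(1)] sum_distrib_left mult.assoc)
    finally show "f (sc a p) = a * f p" .
  qed
  moreover have "f p \<in> \<omega> p" for p
  proof -
    have "f p \<in> \<omega> (\<Sum>x\<in>S p. sc (\<phi> x p) x)" unfolding f_def by (rule LO_sum[OF L m r])
    then show ?thesis using \<phi>(3)[of p] by (simp add: S_def)
  qed
  ultimately show ?thesis by blast
qed

lemma lift_props: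
  assumes L: "(I, \<omega>) \<in> LO sc" and f: "f \<in> dual sc" and fo: "\<And>p. f p \<in> \<omega> p"
  shows "\<And>p. f p \<in> I" "\<forall>y\<in>I. \<exists>k\<in>range f. \<exists>v\<in>ideal_sq I. y = k + v"
proof -
  have I: "is_ideal I" using LO_D(1)[OF L] .
  show fI: "f p \<in> I" for p using coset_sub[OF I LO_D(2)[OF L] fo] .
  show "\<forall>y\<in>I. \<exists>k\<in>range f. \<exists>v\<in>ideal_sq I. y = k + v"
  proof
    fix y assume "y \<in> I"
    then obtain p where "y \<in> \<omega> p" using LO_D(5)[OF L] by blast
    then have "y - f p \<in> ideal_sq I" using coset_mem_diff[OF I LO_D(2)[OF L] fo] by blast
    then show "\<exists>k\<in>range f. \<exists>v\<in>ideal_sq I. y = k + v" by (intro bexI[of _ "f p"] bexI[of _ "y - f p"]) auto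
  qed
qed

lemma witness_exists:
  assumes N: "noetherian_ring TYPE('a::comm_ring_1)" and P: "projective_module (sc :: 'a \<Rightarrow> 'b::ab_group_add \<Rightarrow> 'b)"
    and L: "x \<in> LO sc"
  shows "\<exists>a. chi_wit sc x a"
proof -
  obtain I \<omega> where x: "x = (I, \<omega>)" by (cases x)
  have L': "(I, \<omega>) \<in> LO sc" using L x by simp
  have I: "is_ideal I" using LO_D(1)[OF L'] .
  obtain f where f: "f \<in> dual sc" "\<And>p. f p \<in> \<omega> p" using lift_exists[OF P L'] by blast
  note fp = lift_props[OF L' f]
  obtain G where G: "finite G" "G \<subseteq> I" "I = ideal_gen G" using noeth_fg[OF N I] by blast
  obtain s where s: "s \<in> I" "\<And>y. y \<in> I \<Longrightarrow> (1 - s) * y \<in> range f"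
    using nakayama[OF I range_dual_ideal[OF f(1)] fp(2) G(1,2)] G(3) by blast
  have Qs: "(f, s) \<in> Qs sc"
    using s f(1) unfolding Qs_def by (auto simp: mult.commute)
  have "I = {f q + a * s |q a. True}"
  proof
    show "I \<subseteq> {f q + a * s |q a. True}"
    proof
      fix y assume y: "y \<in> I"
      then obtain q where "(1 - s) * y = f q" using s(2) by blast
      then have "y = f q + y * s" by (simp add: algebra_simps)
      then show "y \<in> {f q + a * s |q a. True}" by blast
    qed
    show "{f q + a * s |q a. True} \<subseteq> I"
      using fp(1) s(1) I by (auto intro!: ideal_add ideal_multL)
  qed
  then have "chi_wit sc (I, \<omega>) (f, s)"
    unfolding chi_wit_def using Qs fp(1) f(2) s(1) by auto
  then show ?thesis using x by blast
qed


section \<open>Generic homotopy relations\<close>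

lemma htpy_rel_iff: "(x, y) \<in> htpy_rel X XT ev0 ev1 \<longleftrightarrow> x \<in> X \<and> y \<in> X \<and>
   equivclp (\<lambda>u v. u \<in> X \<and> v \<in> X \<and> (\<exists>H\<in>XT. ev0 H = u \<and> ev1 H = v)) x y"
  by (simp add: htpy_rel_def)

lemma htpy_equiv: "equiv X (htpy_rel X XT ev0 ev1)"
proof -
  let ?E = "\<lambda>u v. u \<in> X \<and> v \<in> X \<and> (\<exists>H\<in>XT. ev0 H = u \<and> ev1 H = v)"
  have r: "refl_on X (htpy_rel X XT ev0 ev1)"
    unfolding refl_on_def htpy_rel_def by (auto simp: reflpD[OF reflp_equivclp])
  have s: "sym (htpy_rel X XT ev0 ev1)"
  proof (rule symI)
    fix x y assume "(x, y) \<in> htpy_rel X XT ev0 ev1"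
    then show "(y, x) \<in> htpy_rel X XT ev0 ev1" unfolding htpy_rel_iff by (auto intro: equivclp_sym)
  qed
  have t: "trans (htpy_rel X XT ev0 ev1)"
  proof (rule transI)
    fix x y z assume "(x, y) \<in> htpy_rel X XT ev0 ev1" "(y, z) \<in> htpy_rel X XT ev0 ev1"
    then show "(x, z) \<in> htpy_rel X XT ev0 ev1" unfolding htpy_rel_iff
      using transpD[OF transp_equivclp, of ?E x y z] by blast
  qed
  have "htpy_rel X XT ev0 ev1 \<subseteq> X \<times> X" unfolding htpy_rel_def by auto
  then show ?thesis using r s t by (simp add: equiv_def)
qed

lemma htpy_sub: "(x, y) \<in> htpy_rel X XT ev0 ev1 \<Longrightarrow> x \<in> X \<and> y \<in> X"
  unfolding htpy_rel_def by auto

lemma htpy_refl: "x \<in> X \<Longrightarrow> (x, x) \<in> htpy_rel X XT ev0 ev1"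
  using htpy_equiv[of X XT ev0 ev1] unfolding equiv_def refl_on_def by auto

lemma htpy_sym: "(x, y) \<in> htpy_rel X XT ev0 ev1 \<Longrightarrow> (y, x) \<in> htpy_rel X XT ev0 ev1"
  using htpy_equiv[of X XT ev0 ev1] unfolding equiv_def sym_def by auto

lemma htpy_trans: "(x, y) \<in> htpy_rel X XT ev0 ev1 \<Longrightarrow> (y, z) \<in> htpy_rel X XT ev0 ev1 \<Longrightarrow> (x, z) \<in> htpy_rel X XT ev0 ev1"
  using htpy_equiv[of X XT ev0 ev1] unfolding equiv_def trans_def by blast

lemma htpy_edge: "H \<in> XT \<Longrightarrow> ev0 H \<in> X \<Longrightarrow> ev1 H \<in> X \<Longrightarrow> (ev0 H, ev1 H) \<in> htpy_rel X XT ev0 ev1"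
proof -
  assume a: "H \<in> XT" "ev0 H \<in> X" "ev1 H \<in> X"
  let ?E = "\<lambda>u v. u \<in> X \<and> v \<in> X \<and> (\<exists>H\<in>XT. ev0 H = u \<and> ev1 H = v)"
  have "symclp ?E (ev0 H) (ev1 H)" unfolding symclp_def using a by blast
  then have "(symclp ?E)\<^sup>*\<^sup>* (ev0 H) (ev1 H)" by (rule r_into_rtranclp)
  then show ?thesis unfolding htpy_rel_def equivclp_def using a by auto
qed

lemma htpy_map:
  assumes xy: "(x, y) \<in> htpy_rel X XT ev0 ev1"
    and S: "equiv Y S"
    and fX: "\<And>x. x \<in> X \<Longrightarrow> f x \<in> Y"
    and fE: "\<And>H. H \<in> XT \<Longrightarrow> ev0 H \<in> X \<Longrightarrow> ev1 H \<in> X \<Longrightarrow> (f (ev0 H), f (ev1 H)) \<in> S"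
  shows "(f x, f y) \<in> S"
proof -
  define E where "E = (\<lambda>u v. u \<in> X \<and> v \<in> X \<and> (\<exists>H\<in>XT. ev0 H = u \<and> ev1 H = v))"
  have x: "x \<in> X" and st: "(symclp E)\<^sup>*\<^sup>* x y" using xy unfolding htpy_rel_def equivclp_def E_def by auto
  from st show ?thesis
  proof (induction rule: rtranclp_induct)
    case base
    then show ?case using S fX[OF x] unfolding equiv_def refl_on_def by auto
  next
    case (step y z)
    have "(f y, f z) \<in> S"
      using step(2) unfolding symclp_def E_def
    proof
      assume "y \<in> X \<and> z \<in> X \<and> (\<exists>H\<in>XT. ev0 H = y \<and> ev1 H = z)"
      then show ?thesis using fE by blast
    next
      assume "z \<in> X \<and> y \<in> X \<and> (\<exists>H\<in>XT. ev0 H = z \<and> ev1 H = y)"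
      then have "(f z, f y) \<in> S" using fE by blast
      then show ?thesis using S unfolding equiv_def sym_def by blast
    qed
    then show ?case using step(3) S unfolding equiv_def trans_def by blast
  qed
qed

lemma htpy_compat:
  assumes S: "equiv Y S"
    and fX: "\<And>x. x \<in> X \<Longrightarrow> f x \<in> Y"
    and fE: "\<And>H. H \<in> XT \<Longrightarrow> ev0 H \<in> X \<Longrightarrow> ev1 H \<in> X \<Longrightarrow> (f (ev0 H), f (ev1 H)) \<in> S"
  shows "compat (htpy_rel X XT ev0 ev1) S f"
  unfolding compat_def
proof (intro allI impI)
  fix x y assume "(x, y) \<in> htpy_rel X XT ev0 ev1"
  then show "(f x, f y) \<in> S" by (rule htpy_map[OF _ S fX fE])
qed

lemma induced_class:
  assumes R: "equiv X R" and S: "equiv Y S" and c: "compat R S f" and x: "x \<in> X"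
  shows "induced S f (R``{x}) = S``{f x}"
proof -
  have "S``{f x'} = S``{f x}" if "x' \<in> R``{x}" for x'
  proof -
    have "(f x, f x') \<in> S" using c that unfolding compat_def by blast
    then show ?thesis using equiv_class_eq_iff[OF S] by blast
  qed
  moreover have "x \<in> R``{x}" using R x by (rule equiv_class_self)
  ultimately show ?thesis unfolding induced_def by blast
qed

lemma induced_bij:
  assumes R: "equiv X R" and S: "equiv Y S"
    and cf: "compat R S f" and cg: "compat S R g"
    and fX: "\<And>x. x \<in> X \<Longrightarrow> f x \<in> Y" and gY: "\<And>y. y \<in> Y \<Longrightarrow> g y \<in> X"
    and gf: "\<And>x. x \<in> X \<Longrightarrow> (g (f x), x) \<in> R"
    and fg: "\<And>y. y \<in> Y \<Longrightarrow> (f (g y), y) \<in> S"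
  shows "bij_betw (induced S f) (X//R) (Y//S)"
  unfolding bij_betw_def
proof
  show "inj_on (induced S f) (X // R)"
  proof (rule inj_onI)
    fix C D assume C: "C \<in> X//R" and D: "D \<in> X//R" and eq: "induced S f C = induced S f D"
    obtain x where x: "x \<in> X" "C = R``{x}" using C by (auto elim: quotientE)
    obtain y where y: "y \<in> X" "D = R``{y}" using D by (auto elim: quotientE)
    have "S``{f x} = S``{f y}" using eq x y induced_class[OF R S cf] by simp
    then have "(f x, f y) \<in> S" using eq_equiv_class_iff[OF S fX[OF x(1)] fX[OF y(1)]] by simp
    then have "(g (f x), g (f y)) \<in> R" using cg unfolding compat_def by blast
    moreover have "(x, g (f x)) \<in> R" using gf[OF x(1)] R unfolding equiv_def by (blast intro: symD)
    ultimately have "(x, g (f y)) \<in> R" using R unfolding equiv_def by (blast intro: transD)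
    then have "(x, y) \<in> R" using gf[OF y(1)] R unfolding equiv_def by (blast intro: transD)
    then show "C = D" using x y equiv_class_eq_iff[OF R] by blast
  qed
  show "induced S f ` (X // R) = Y // S"
  proof
    show "induced S f ` (X // R) \<subseteq> Y // S"
    proof
      fix C assume "C \<in> induced S f ` (X // R)"
      then obtain x where x: "x \<in> X" "C = induced S f (R``{x})" by (auto elim!: quotientE)
      then have "C = S``{f x}" using induced_class[OF R S cf] by simp
      then show "C \<in> Y // S" using fX[OF x(1)] by (simp add: quotientI)
    qed
    show "Y // S \<subseteq> induced S f ` (X // R)"
    proof
      fix C assume "C \<in> Y // S"
      then obtain y where y: "y \<in> Y" "C = S``{y}" by (auto elim: quotientE)
      have "S``{f (g y)} = S``{y}" using fg[OF y(1)] equiv_class_eq_iff[OF S] by blast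
      then have "induced S f (R``{g y}) = C" using induced_class[OF R S cf gY[OF y(1)]] y by simp
      then show "C \<in> induced S f ` (X // R)" using gY[OF y(1)] by (auto intro: quotientI)
    qed
  qed
qed

lemma compat_comp: "compat R S f \<Longrightarrow> compat S T g \<Longrightarrow> compat R T (\<lambda>x. g (f x))"
  unfolding compat_def by blast


section \<open>Specialisation\<close>

lemma const_add: "[:x + y:] = [:x:] + [:y:]" by simp

lemma spec_dual_dual:
  assumes F: "F \<in> dual (pscale sc)" and m: "module sc"
  shows "spec_dual t F \<in> dual sc"
proof (rule dualI[OF m])
  show "spec_dual t F (x + y) = spec_dual t F x + spec_dual t F y" for x y
    unfolding spec_dual_def by (subst const_add) (simp only: dual_add[OF F] poly_add)
  show "spec_dual t F (sc a x) = a * spec_dual t F x" for a x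
    by (simp add: spec_dual_def pscale_const_const[OF m, symmetric] dual_scale[OF F])
qed

lemma spec_dual_range: assumes F: "F \<in> dual (pscale sc)" and m: "module sc" shows "poly (F Q) t \<in> range (spec_dual t F)"
  by (subst poly_dual_eval[OF F m]) (rule rangeI)

lemma ring_id1: fixes a d :: "'a::comm_ring_1" shows "(a + d) * (1 - (a + d)) = a * (1 - a) + d * (1 - a - a - d)"
  by (simp add: algebra_simps)

lemma const_mult_one_minus: "[:s:] * (1 - [:s:]) = [:s * (1 - s::'a::comm_ring_1):]"
  by (rule poly_eqI) (simp add: mult_pCons_left coeff_pCons split: nat.split)

lemma spec_Qs_Qs:
  assumes H: "H \<in> Qs (pscale sc)" and m: "module sc"
  shows "spec_Qs t H \<in> Qs sc"
proof -
  obtain F S where HFS: "H = (F, S)" by (cases H)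
  have F: "F \<in> dual (pscale sc)" and "S * (1 - S) \<in> range F" using H HFS by (auto simp: Qs_def)
  then obtain Q where Q: "S * (1 - S) = F Q" by blast
  have "poly S t * (1 - poly S t) = poly (F Q) t" by (simp flip: Q)
  then have "poly S t * (1 - poly S t) \<in> range (spec_dual t F)" using spec_dual_range[OF F m] by simp
  then show ?thesis using HFS spec_dual_dual[OF F m] by (simp add: spec_Qs_def Qs_def)
qed

definition polyI :: "'a::comm_ring_1 set \<Rightarrow> 'a poly set" where
  "polyI R = {Q. \<forall>j. coeff Q j \<in> R}"

lemma polyI_ideal: assumes R: "is_ideal R" shows "is_ideal (polyI R)"
  unfolding is_ideal_def polyI_def
  by (auto simp: ideal_0[OF R] ideal_add[OF R] coeff_mult intro!: ideal_sum[OF R] ideal_multL[OF R])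

lemma monom_const_mult: "monom a j * [:b:] = monom (a * b) j"
  by (rule poly_eqI) (auto simp: coeff_monom_mult coeff_monom coeff_pCons mult.commute split: nat.split)

lemma monom_polyI: "is_ideal R \<Longrightarrow> a \<in> R \<Longrightarrow> monom a j \<in> polyI R"
  by (auto simp: polyI_def coeff_monom ideal_0)

lemma const_polyI: "is_ideal R \<Longrightarrow> a \<in> R \<Longrightarrow> [:a:] \<in> polyI R"
  by (auto simp: polyI_def coeff_pCons ideal_0 split: nat.split)

lemma polyI_fg:
  assumes G: "finite G0" "I \<subseteq> ideal_gen G0"
  shows "polyI I \<subseteq> ideal_gen ((\<lambda>x. [:x:]) ` G0)"
proof
  fix Q assume Q: "Q \<in> polyI I"
  have "coeff Q j \<in> ideal_gen G0" for j using Q G(2) unfolding polyI_def by blast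
  then have "\<exists>c. coeff Q j = (\<Sum>x\<in>G0. c x * x)" for j unfolding ideal_gen_iff .
  then have "\<forall>j. \<exists>c. coeff Q j = (\<Sum>x\<in>G0. c x * x)" by blast
  then have "\<exists>c. \<forall>j. coeff Q j = (\<Sum>x\<in>G0. c j x * x)" by (rule choice)
  then obtain c where c: "\<And>j. coeff Q j = (\<Sum>x\<in>G0. c j x * x)" by blast
  have "Q = (\<Sum>j\<le>degree Q. monom (coeff Q j) j)" by (simp add: poly_as_sum_of_monoms)
  also have "\<dots> = (\<Sum>j\<le>degree Q. \<Sum>x\<in>G0. monom (c j x) j * [:x:])"
    by (simp only: c monom_sum monom_const_mult)
  finally have "Q = \<dots>" .
  moreover have "(\<Sum>j\<le>degree Q. \<Sum>x\<in>G0. monom (c j x) j * [:x:]) \<in> ideal_gen ((\<lambda>x. [:x:]) ` G0)"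
    by (intro ideal_gen_sum ideal_gen_mult ideal_gen_base) (use G(1) in auto)
  ultimately show "Q \<in> ideal_gen ((\<lambda>x. [:x:]) ` G0)" by simp
qed

lemma polyI_sq:
  assumes R: "is_ideal R" and Q: "\<forall>j. coeff Q j \<in> ideal_sq R"
  shows "Q \<in> ideal_sq (polyI R)"
proof -
  have PI: "is_ideal (polyI R)" by (rule polyI_ideal[OF R])
  have "monom (coeff Q j) j \<in> ideal_sq (polyI R)" for j
  proof -
    obtain n :: nat and x y where xy: "coeff Q j = (\<Sum>i<n. x i * y i)" "\<forall>i<n. x i \<in> R \<and> y i \<in> R"
      using Q unfolding ideal_sq_iff by blast
    have "monom (coeff Q j) j = (\<Sum>i<n. monom (x i) j * [:y i:])"
      by (simp only: xy monom_sum monom_const_mult)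
    also have "\<dots> \<in> ideal_sq (polyI R)"
      by (intro ideal_sum[OF ideal_sq_ideal[OF PI]] ideal_sq_prod monom_polyI const_polyI R) (use xy in auto)
    finally show ?thesis .
  qed
  then have "(\<Sum>j\<le>degree Q. monom (coeff Q j) j) \<in> ideal_sq (polyI R)"
    by (intro ideal_sum[OF ideal_sq_ideal[OF PI]])
  then show ?thesis by (simp add: poly_as_sum_of_monoms)
qed

section \<open>Homotopies in Qs\<close>

lemma Qs_rel_edge:
  assumes H: "H \<in> Qs (pscale sc)" and m: "module sc"
  shows "(spec_Qs 0 H, spec_Qs 1 H) \<in> Qs_rel sc"
  unfolding Qs_rel_def by (rule htpy_edge[where ?ev0.0="spec_Qs 0" and ?ev1.0="spec_Qs 1", OF H spec_Qs_Qs[OF H m] spec_Qs_Qs[OF H m]])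

lemma Qs_line:
  assumes f: "f \<in> dual sc" and s: "(f, s) \<in> Qs sc" and d: "t - s \<in> range f"
  shows "((f, s), (f, t)) \<in> Qs_rel sc"
proof -
  have m: "module sc" using dual_module[OF f] .
  have R: "is_ideal (range f)" by (rule range_dual_ideal[OF f])
  define d where "d = t - s"
  define D where "D = [:0, d:]"
  define S where "S = [:s:] + D"
  have "S * (1 - S) = [:s * (1 - s):] + D * (1 - [:s:] - [:s:] - D)"
    unfolding S_def ring_id1 const_mult_one_minus ..
  moreover have "[:s * (1 - s):] \<in> polyI (range f)" using s R by (intro const_polyI) (auto simp: Qs_def)
  moreover have "D * (1 - [:s:] - [:s:] - D) \<in> polyI (range f)"
  proof -
    have "D \<in> polyI (range f)" using d R unfolding D_def d_def polyI_def
      by (auto simp: coeff_pCons ideal_0 split: nat.split)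
    then show ?thesis using polyI_ideal[OF R] by (simp add: ideal_multR)
  qed
  ultimately have "S * (1 - S) \<in> polyI (range f)" using polyI_ideal[OF R] by (simp add: ideal_add)
  then have "S * (1 - S) \<in> range (pext f)" using range_pext[OF f] unfolding polyI_def by blast
  then have H: "(pext f, S) \<in> Qs (pscale sc)" using pext_dual[OF f] by (simp add: Qs_def)
  have "spec_Qs 0 (pext f, S) = (f, s)" "spec_Qs 1 (pext f, S) = (f, t)"
    by (simp_all add: spec_Qs_def spec_dual_pext[OF f] S_def D_def d_def)
  then show ?thesis using Qs_rel_edge[OF H m] by simp
qed

lemma idem_unique:
  assumes R: "is_ideal R" and sI: "s \<in> I" and tI: "t \<in> I"
    and hs: "\<And>y. y \<in> I \<Longrightarrow> (1 - s) * y \<in> R" and ht: "\<And>y. y \<in> I \<Longrightarrow> (1 - t) * y \<in> R"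
  shows "s - t \<in> R"
proof -
  have "s - t = (1 - t) * s - (1 - s) * t" by (simp add: algebra_simps)
  then show ?thesis using ht[OF sI] hs[OF tI] ideal_diff[OF R] by simp
qed

lemma wit_annih:
  assumes w: "chi_wit sc (I, \<omega>) (f, s)" and I: "is_ideal I"
  shows "\<And>y. y \<in> I \<Longrightarrow> (1 - s) * y \<in> range f"
proof -
  fix y assume y: "y \<in> I"
  have f: "f \<in> dual sc" and ss: "s * (1 - s) \<in> range f" and Ieq: "I = {f q + a * s |q a. True}"
    using w by (auto simp: chi_wit_def Qs_def)
  obtain q a where "y = f q + a * s" using y Ieq by blast
  then have "(1 - s) * y = (1 - s) * f q + a * (s * (1 - s))" by (simp add: algebra_simps)
  moreover have "f q \<in> range f" by simp
  ultimately show "(1 - s) * y \<in> range f" using ss range_dual_ideal[OF f]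
    by (metis ideal_add ideal_multL)
qed


lemma Qs_rel_sym: "(x, y) \<in> Qs_rel sc \<Longrightarrow> (y, x) \<in> Qs_rel sc"
  unfolding Qs_rel_def by (rule htpy_sym)
lemma Qs_rel_trans: "(x, y) \<in> Qs_rel sc \<Longrightarrow> (y, z) \<in> Qs_rel sc \<Longrightarrow> (x, z) \<in> Qs_rel sc"
  unfolding Qs_rel_def by (rule htpy_trans)

lemma chi_witD:
  assumes "chi_wit sc (I, \<omega>) (f, s)"
  shows "f \<in> dual sc" "(f, s) \<in> Qs sc" "\<And>p. f p \<in> I" "\<And>p. f p \<in> \<omega> p" "s \<in> I"
    "I = {f q + a * s |q a. True}"
  using assms unfolding chi_wit_def Qs_def by auto


lemma witness_rel:
  fixes sc :: "'a::comm_ring_1 \<Rightarrow> 'b::ab_group_add \<Rightarrow> 'b"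
  assumes N: "noetherian_ring TYPE('a)" and L: "(I, \<omega>) \<in> LO sc"
    and wf: "chi_wit sc (I, \<omega>) (f, s)" and wg: "chi_wit sc (I, \<omega>) (g, t)"
  shows "((f, s), (g, t)) \<in> Qs_rel sc"
proof -
  have I: "is_ideal I" using LO_D(1)[OF L] .
  note F1 = chi_witD[OF wf] and G1 = chi_witD[OF wg]
  have m: "module sc" using dual_module[OF F1(1)] .
  define h where "h p = g p - f p" for p
  have h: "h \<in> dual sc"
    by (rule dualI[OF m]) (simp_all add: h_def dual_add[OF F1(1)] dual_add[OF G1(1)] dual_scale[OF F1(1)] dual_scale[OF G1(1)] algebra_simps)
  have hsq: "h p \<in> ideal_sq I" for p
    unfolding h_def by (rule coset_mem_diff[OF I LO_D(2)[OF L] F1(4) G1(4)])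
  define X :: "'a poly" where "X = monom 1 1"
  define F where "F Q = pext f Q + X * pext h Q" for Q
  have Fd: "F \<in> dual (pscale sc)"
  proof (rule dualI[OF module_pscale[OF m]])
    show "F (x + y) = F x + F y" for x y
      by (simp add: F_def dual_add[OF pext_dual[OF F1(1)]] dual_add[OF pext_dual[OF h]] algebra_simps)
    show "F (pscale sc a x) = a * F x" for a x
      by (simp add: F_def dual_scale[OF pext_dual[OF F1(1)]] dual_scale[OF pext_dual[OF h]] algebra_simps)
  qed
  define J where "J = polyI I"
  have Jid: "is_ideal J" unfolding J_def by (rule polyI_ideal[OF I])
  have Kid: "is_ideal (range F)" by (rule range_dual_ideal[OF Fd])
  have sqI: "is_ideal (ideal_sq I)" by (rule ideal_sq_ideal[OF I])
  have cov: "\<forall>Y\<in>J. \<exists>k\<in>range F. \<exists>v\<in>ideal_sq J. Y = k + v"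
  proof
    fix Y assume Y: "Y \<in> J"
    have ex: "\<exists>p. coeff Y j - f p \<in> ideal_sq I" for j
    proof -
      have "coeff Y j \<in> I" using Y by (simp add: J_def polyI_def)
      then obtain k v where "k \<in> range f" "v \<in> ideal_sq I" "coeff Y j = k + v"
        using lift_props(2)[OF L F1(1) F1(4)] by blast
      moreover from \<open>k \<in> range f\<close> obtain q where "k = f q" by blast
      ultimately show ?thesis by (intro exI[of _ q]) simp
    qed
    define p where "p j = (SOME p. coeff Y j - f p \<in> ideal_sq I)" for j
    have p: "coeff Y j - f (p j) \<in> ideal_sq I" for j unfolding p_def by (rule someI_ex[OF ex])
    define P0 where "P0 = (\<Sum>j\<le>degree Y. monom (p j) j)"
    have cP0: "coeff P0 j = (if j \<le> degree Y then p j else 0)" for j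
      by (simp add: P0_def coeff_sum coeff_monom sum.delta)
    have "\<forall>j. coeff (Y - F P0) j \<in> ideal_sq I"
    proof
      fix j
      have c1: "coeff Y j - f (coeff P0 j) \<in> ideal_sq I"
        using p[of j] by (cases "j \<le> degree Y") (auto simp: cP0 coeff_eq_0 dual_zero[OF F1(1)] ideal_sq_0)
      have c2: "coeff (X * pext h P0) j \<in> ideal_sq I"
        by (simp add: X_def coeff_monom_mult coeff_pext[of h, OF dual_zero[OF h]] hsq ideal_sq_0)
      have "coeff (Y - F P0) j = (coeff Y j - f (coeff P0 j)) - coeff (X * pext h P0) j"
        by (simp add: F_def coeff_pext[of f, OF dual_zero[OF F1(1)]])
      then show "coeff (Y - F P0) j \<in> ideal_sq I" using ideal_diff[OF sqI c1 c2] by (simp only:)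
    qed
    then have "Y - F P0 \<in> ideal_sq J" unfolding J_def by (rule polyI_sq[OF I])
    then show "\<exists>k\<in>range F. \<exists>v\<in>ideal_sq J. Y = k + v"
      by (intro bexI[of _ "F P0"] bexI[of _ "Y - F P0"]) auto
  qed
  obtain G0 where G0: "finite G0" "G0 \<subseteq> I" "I = ideal_gen G0" using noeth_fg[OF N I] by blast
  have Gfin: "finite ((\<lambda>x. [:x:]) ` G0)" using G0(1) by simp
  have GJ: "(\<lambda>x. [:x:]) ` G0 \<subseteq> J" using G0(2) const_polyI[OF I] unfolding J_def by blast
  have JG: "J \<subseteq> ideal_gen ((\<lambda>x. [:x:]) ` G0)" unfolding J_def by (rule polyI_fg) (use G0 in auto)
  obtain S where S: "S \<in> J" "\<And>Y. Y \<in> J \<Longrightarrow> (1 - S) * Y \<in> range F"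
    using nakayama[OF Jid Kid cov Gfin GJ JG] by blast
  have H: "(F, S) \<in> Qs (pscale sc)"
    using S Fd unfolding Qs_def by (auto simp: mult.commute)
  have sd0: "spec_dual 0 F = f"
    by (rule ext) (simp add: spec_dual_def F_def X_def pext_const dual_zero[OF F1(1)] dual_zero[OF h] poly_monom)
  have sd1: "spec_dual 1 F = g"
    by (rule ext) (simp add: spec_dual_def F_def X_def pext_const[of h, OF dual_zero[OF h]] pext_const[of f, OF dual_zero[OF F1(1)]] poly_monom h_def)
  define s0 where "s0 = poly S 0"
  define s1 where "s1 = poly S 1"
  have rel1: "((f, s0), (g, s1)) \<in> Qs_rel sc"
    using Qs_rel_edge[OF H m] by (simp add: spec_Qs_def sd0 sd1 s0_def s1_def)
  have SI: "coeff S i \<in> I" for i using S(1) by (simp add: J_def polyI_def)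
  have s0I: "s0 \<in> I" using SI by (simp add: s0_def poly_0_coeff_0)
  have s1I: "s1 \<in> I" unfolding s1_def poly_altdef by (intro ideal_sum[OF I]) (simp add: SI)
  have ann: "(1 - poly S t') * y \<in> range (spec_dual t' F)" if "y \<in> I" for y t'
  proof -
    have "[:y:] \<in> J" using that const_polyI[OF I] by (simp add: J_def)
    then obtain Q where "(1 - S) * [:y:] = F Q" using S(2) by blast
    then have "(1 - poly S t') * y = poly (F Q) t'" by (metis poly_pCons poly_0 mult_zero_right add_0_right poly_diff poly_1 poly_mult)
    then show ?thesis using spec_dual_range[OF Fd m] by simp
  qed
  have "s0 - s \<in> range f"
    using idem_unique[OF range_dual_ideal[OF F1(1)] s0I F1(5) _ wit_annih[OF wf I]] ann[of _ 0] sd0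
    by (simp add: s0_def)
  then have r0: "((f, s), (f, s0)) \<in> Qs_rel sc" by (rule Qs_line[OF F1(1) F1(2)])
  have "s1 - t \<in> range g"
    using idem_unique[OF range_dual_ideal[OF G1(1)] s1I G1(5) _ wit_annih[OF wg I]] ann[of _ 1] sd1
    by (simp add: s1_def)
  then have r2: "((g, t), (g, s1)) \<in> Qs_rel sc" by (rule Qs_line[OF G1(1) G1(2)])
  show ?thesis using Qs_rel_trans[OF Qs_rel_trans[OF r0 rel1] Qs_rel_sym[OF r2]] .
qed


lemma witness_spec:
  assumes m: "module sc" and XL: "(J, \<Omega>) \<in> LO (pscale sc)" and w: "chi_wit (pscale sc) (J, \<Omega>) (F, S)"
  shows "chi_wit sc (spec_LO t (J, \<Omega>)) (spec_Qs t (F, S))"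
proof -
  note W = chi_witD[OF w]
  define Jt where "Jt = (\<lambda>f. poly f t) ` J"
  define ft where "ft = spec_dual t F"
  define st where "st = poly S t"
  have sLO: "spec_LO t (J, \<Omega>) = (Jt, \<lambda>q. {poly f t + y |f y. f \<in> \<Omega> [:q:] \<and> y \<in> ideal_sq Jt})"
    by (simp add: spec_LO_def Jt_def Let_def)
  have sQs: "spec_Qs t (F, S) = (ft, st)" by (simp add: spec_Qs_def ft_def st_def)
  have Qs: "(ft, st) \<in> Qs sc" using spec_Qs_Qs[OF W(2) m, of t] sQs by simp
  have ftJ: "ft p \<in> Jt" for p unfolding ft_def Jt_def spec_dual_def using W(3) by blast
  have ftO: "ft p \<in> {poly f t + y |f y. f \<in> \<Omega> [:p:] \<and> y \<in> ideal_sq Jt}" for p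
    unfolding ft_def spec_dual_def
    by (intro CollectI exI[of _ "F [:p:]"] exI[of _ 0] conjI) (simp_all add: ideal_sq_0 W(4))
  have stJ: "st \<in> Jt" unfolding st_def Jt_def using W(5) by blast
  have "Jt = {ft q + a * st |q a. True}"
  proof
    show "Jt \<subseteq> {ft q + a * st |q a. True}"
    proof
      fix y assume "y \<in> Jt"
      then obtain g where "g \<in> J" "y = poly g t" unfolding Jt_def by blast
      then obtain Q B where "y = poly (F Q + B * S) t" using W(6) by blast
      then have "y = ft (peval sc t Q) + poly B t * st"
        by (simp add: poly_dual_eval[OF W(1) m] ft_def st_def)
      then show "y \<in> {ft q + a * st |q a. True}" by blast
    qed
    show "{ft q + a * st |q a. True} \<subseteq> Jt"
    proof
      fix y assume "y \<in> {ft q + a * st |q a. True}"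
      then obtain q a where y: "y = ft q + a * st" by blast
      have "F [:q:] + [:a:] * S \<in> J" using W(6) by blast
      moreover have "poly (F [:q:] + [:a:] * S) t = y" by (simp add: y ft_def spec_dual_def st_def)
      ultimately show "y \<in> Jt" unfolding Jt_def by (metis image_eqI)
    qed
  qed
  then show ?thesis unfolding sLO sQs chi_wit_def using Qs ftJ ftO stJ by auto
qed

section \<open>The map eta'\<close>

lemma eta'_eq: "eta' (f, s) = ({f q + a * s |q a. True}, \<lambda>p. (+) (f p) ` ideal_sq {f q + a * s |q a. True})"
  by (simp add: eta'_def Let_def)

lemma span_ideal:
  assumes f: "f \<in> dual sc"
  shows "is_ideal {f q + a * s |q a. True}"
  unfolding is_ideal_def
proof (intro conjI ballI allI)
  show "0 \<in> {f q + a * s |q a. True}" by (rule CollectI, rule exI[of _ 0], rule exI[of _ 0]) (simp add: dual_zero[OF f])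
  show "x + y \<in> {f q + a * s |q a. True}" if xy: "x \<in> {f q + a * s |q a. True}" "y \<in> {f q + a * s |q a. True}" for x y
  proof -
    obtain q a q' a' where "x = f q + a * s" "y = f q' + a' * s" using xy by blast
    then have "x + y = f (q + q') + (a + a') * s" by (simp add: dual_add[OF f] algebra_simps)
    then show ?thesis by blast
  qed
  show "b * x \<in> {f q + a * s |q a. True}" if xy: "x \<in> {f q + a * s |q a. True}" for b x
  proof -
    obtain q a where "x = f q + a * s" using xy by blast
    then have "b * x = f (sc b q) + (b * a) * s" by (simp add: dual_scale[OF f] algebra_simps)
    then show ?thesis by blast
  qed
qed

lemma eta'_LO:
  assumes Q: "(f, s) \<in> Qs sc"
  shows "eta' (f, s) \<in> LO sc"
proof -
  have f: "f \<in> dual sc" and ss: "s * (1 - s) \<in> range f" using Q by (auto simp: Qs_def)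
  define I where "I = {f q + a * s |q a. True}"
  have I: "is_ideal I" unfolding I_def by (rule span_ideal[OF f])
  have sqI: "is_ideal (ideal_sq I)" by (rule ideal_sq_ideal[OF I])
  have fI: "f p \<in> I" for p unfolding I_def by (rule CollectI, rule exI[of _ p], rule exI[of _ 0]) simp
  have sI: "s \<in> I" unfolding I_def by (rule CollectI, rule exI[of _ 0], rule exI[of _ 1]) (simp add: dual_zero[OF f])
  have "(I, \<lambda>p. (+) (f p) ` ideal_sq I) \<in> LO sc"
    unfolding LO_def
  proof (clarify, intro conjI allI impI ballI)
    show "is_ideal I" by fact
    show "(+) (f p) ` ideal_sq I \<in> quot_sq I" for p unfolding quot_sq_def using fI by blast
    show "x + y \<in> (+) (f (p + q)) ` ideal_sq I" if xy: "x \<in> (+) (f p) ` ideal_sq I" "y \<in> (+) (f q) ` ideal_sq I" for p q x y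
    proof -
      obtain e e' where "e \<in> ideal_sq I" "e' \<in> ideal_sq I" "x = f p + e" "y = f q + e'" using xy by blast
      then show ?thesis using ideal_add[OF sqI] by (auto simp: dual_add[OF f] algebra_simps intro!: image_eqI[of _ _ "e + e'"])
    qed
    show "a * x \<in> (+) (f (sc a p)) ` ideal_sq I" if xy: "x \<in> (+) (f p) ` ideal_sq I" for a p x
    proof -
      obtain e where e: "e \<in> ideal_sq I" "x = f p + e" using xy by blast
      have "a * e \<in> ideal_sq I" by (rule ideal_multL[OF sqI e(1)])
      moreover have "a * x = f (sc a p) + a * e" using e(2) by (simp add: dual_scale[OF f] algebra_simps)
      ultimately show ?thesis by blast
    qed
    show "\<exists>p. x \<in> (+) (f p) ` ideal_sq I" if xy: "x \<in> I" for x
    proof -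
      obtain q a where x: "x = f q + a * s" using xy unfolding I_def by blast
      obtain p0 where p0: "f p0 = s * (1 - s)" using ss by (metis rangeE)
      have "(a * s) * s \<in> ideal_sq I" using sI I by (intro ideal_sq_prod ideal_multL)
      moreover have "x = f (q + sc a p0) + (a * s) * s" by (simp add: x dual_add[OF f] dual_scale[OF f] p0 algebra_simps)
      ultimately show ?thesis by blast
    qed
  qed
  then show ?thesis by (simp add: eta'_eq I_def)
qed

lemma eta'_wit:
  assumes Q: "(f, s) \<in> Qs sc"
  shows "chi_wit sc (eta' (f, s)) (f, s)"
proof -
  have f: "f \<in> dual sc" using Q by (simp add: Qs_def)
  define I where "I = {f q + a * s |q a. True}"
  have fI: "f p \<in> I" for p unfolding I_def by (rule CollectI, rule exI[of _ p], rule exI[of _ 0]) simp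
  have sI: "s \<in> I" unfolding I_def by (rule CollectI, rule exI[of _ 0], rule exI[of _ 1]) (simp add: dual_zero[OF f])
  have "f p \<in> (+) (f p) ` ideal_sq I" for p using ideal_sq_0 by (metis add_0_right image_eqI)
  then show ?thesis unfolding eta'_eq chi_wit_def I_def[symmetric] using Q fI sI by (auto simp: I_def)
qed

lemma wit_eta':
  assumes L: "x \<in> LO sc" and w: "chi_wit sc x a"
  shows "eta' a = x"
proof -
  obtain I \<omega> where x: "x = (I, \<omega>)" by (cases x)
  obtain f s where a: "a = (f, s)" by (cases a)
  note W = chi_witD[OF w[unfolded x a]]
  have L': "(I, \<omega>) \<in> LO sc" using L x by simp
  have "\<omega> p = (+) (f p) ` ideal_sq I" for p by (rule coset_eq[OF LO_D(1,2)[OF L'] W(4)])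
  then show ?thesis using W(6) by (simp add: x a eta'_eq[of f s, folded W(6)] fun_eq_iff)
qed

lemma poly_ideal_sq:
  assumes "e \<in> ideal_sq J"
  shows "poly e t \<in> ideal_sq ((\<lambda>f. poly f t) ` J)"
proof -
  obtain n :: nat and x y where xy: "e = (\<Sum>i<n. x i * y i)" "\<forall>i<n. x i \<in> J \<and> y i \<in> J"
    using assms unfolding ideal_sq_iff by blast
  have "poly e t = (\<Sum>i<n. poly (x i) t * poly (y i) t)" by (simp add: xy poly_sum)
  moreover have "\<forall>i<n. poly (x i) t \<in> (\<lambda>f. poly f t) ` J \<and> poly (y i) t \<in> (\<lambda>f. poly f t) ` J" using xy by auto
  ultimately show ?thesis unfolding ideal_sq_iff by (intro exI[of _ n] exI[of _ "\<lambda>i. poly (x i) t"] exI[of _ "\<lambda>i. poly (y i) t"]) auto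
qed

lemma eta'_spec:
  assumes H: "(F, S) \<in> Qs (pscale sc)" and m: "module sc"
  shows "spec_LO t (eta' (F, S)) = eta' (spec_Qs t (F, S))"
proof -
  have Fd: "F \<in> dual (pscale sc)" using H by (simp add: Qs_def)
  define J where "J = {F q + a * S |q a. True}"
  define ft where "ft = spec_dual t F"
  define st where "st = poly S t"
  define I where "I = {ft q + a * st |q a. True}"
  have JI: "(\<lambda>f. poly f t) ` J = I"
  proof
    show "(\<lambda>f. poly f t) ` J \<subseteq> I"
    proof
      fix y assume "y \<in> (\<lambda>f. poly f t) ` J"
      then obtain Q B where "y = poly (F Q + B * S) t" unfolding J_def by blast
      then have "y = ft (peval sc t Q) + poly B t * st"
        by (simp add: poly_dual_eval[OF Fd m] ft_def st_def)
      then show "y \<in> I" unfolding I_def by blast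
    qed
    show "I \<subseteq> (\<lambda>f. poly f t) ` J"
    proof
      fix y assume "y \<in> I"
      then obtain q a where y: "y = ft q + a * st" unfolding I_def by blast
      have "F [:q:] + [:a:] * S \<in> J" unfolding J_def by blast
      moreover have "poly (F [:q:] + [:a:] * S) t = y" by (simp add: y ft_def spec_dual_def st_def)
      ultimately show "y \<in> (\<lambda>f. poly f t) ` J" by (metis image_eqI)
    qed
  qed
  have JId: "is_ideal J" unfolding J_def by (rule span_ideal[OF Fd])
  have IId: "is_ideal I" unfolding I_def ft_def by (rule span_ideal[OF spec_dual_dual[OF Fd m]])
  have sqI: "is_ideal (ideal_sq I)" by (rule ideal_sq_ideal[OF IId])
  have om: "{poly f t + y |f y. f \<in> (+) (F [:q:]) ` ideal_sq J \<and> y \<in> ideal_sq I} = (+) (ft q) ` ideal_sq I" for q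
  proof
    show "{poly f t + y |f y. f \<in> (+) (F [:q:]) ` ideal_sq J \<and> y \<in> ideal_sq I} \<subseteq> (+) (ft q) ` ideal_sq I"
    proof
      fix z assume "z \<in> {poly f t + y |f y. f \<in> (+) (F [:q:]) ` ideal_sq J \<and> y \<in> ideal_sq I}"
      then obtain e y where ey: "e \<in> ideal_sq J" "y \<in> ideal_sq I" "z = poly (F [:q:] + e) t + y" by blast
      have "poly e t \<in> ideal_sq I" using poly_ideal_sq[OF ey(1), of t] JI by simp
      then have "poly e t + y \<in> ideal_sq I" using ey(2) ideal_add[OF sqI] by blast
      moreover have "z = ft q + (poly e t + y)" using ey(3) by (simp add: ft_def spec_dual_def)
      ultimately show "z \<in> (+) (ft q) ` ideal_sq I" by blast
    qed
    show "(+) (ft q) ` ideal_sq I \<subseteq> {poly f t + y |f y. f \<in> (+) (F [:q:]) ` ideal_sq J \<and> y \<in> ideal_sq I}"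
    proof
      fix z assume "z \<in> (+) (ft q) ` ideal_sq I"
      then obtain y where y: "y \<in> ideal_sq I" "z = ft q + y" by blast
      have "F [:q:] \<in> (+) (F [:q:]) ` ideal_sq J" using ideal_sq_0 by (metis add_0_right image_eqI)
      moreover have "z = poly (F [:q:]) t + y" using y by (simp add: ft_def spec_dual_def)
      ultimately show "z \<in> {poly f t + y |f y. f \<in> (+) (F [:q:]) ` ideal_sq J \<and> y \<in> ideal_sq I}" using y(1) by blast
    qed
  qed
  have "spec_LO t (eta' (F, S)) = (I, \<lambda>q. (+) (ft q) ` ideal_sq I)"
    unfolding eta'_eq J_def[symmetric] spec_LO_def Let_def using om JI by (simp add: fun_eq_iff)
  moreover have "eta' (spec_Qs t (F, S)) = (I, \<lambda>q. (+) (ft q) ` ideal_sq I)"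
    by (simp add: spec_Qs_def eta'_eq ft_def st_def I_def)
  ultimately show ?thesis by simp
qed


section \<open>Qt\<close>

lemma QtD: "(f, p, s) \<in> Qt sc \<Longrightarrow> f \<in> dual sc \<and> f p + s * (s - 1) = 0"
  by (simp add: Qt_def)

lemma nu_Qs: "x \<in> Qt sc \<Longrightarrow> nu x \<in> Qs sc"
proof -
  assume x: "x \<in> Qt sc"
  obtain f p s where xx: "x = (f, p, s)" by (cases x)
  then have "f \<in> dual sc" "f p + s * (s - 1) = 0" using x by (auto simp: Qt_def)
  moreover have "s * (1 - s) = f p" using \<open>f p + s * (s - 1) = 0\<close> by (simp add: algebra_simps eq_neg_iff_add_eq_0[symmetric])
  ultimately show ?thesis by (auto simp: nu_def xx Qs_def)
qed

lemma spec_Qt_Qt: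
  assumes H: "H \<in> Qt (pscale sc)" and m: "module sc"
  shows "spec_Qt sc t H \<in> Qt sc"
proof -
  obtain F P S where HH: "H = (F, P, S)" by (cases H)
  have F: "F \<in> dual (pscale sc)" and e: "F P + S * (S - 1) = 0" using H HH by (auto simp: Qt_def)
  have "poly (F P + S * (S - 1)) t = 0" using e by simp
  then have "spec_dual t F (peval sc t P) + poly S t * (poly S t - 1) = 0"
    by (simp add: poly_dual_eval[OF F m])
  then show ?thesis using spec_dual_dual[OF F m] by (simp add: HH spec_Qt_def Qt_def)
qed

lemma Qt_rel_edge:
  assumes H: "H \<in> Qt (pscale sc)" and m: "module sc"
  shows "(spec_Qt sc 0 H, spec_Qt sc 1 H) \<in> Qt_rel sc"
  unfolding Qt_rel_def by (rule htpy_edge[where ?ev0.0="spec_Qt sc 0" and ?ev1.0="spec_Qt sc 1", OF H spec_Qt_Qt[OF H m] spec_Qt_Qt[OF H m]])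

lemma Qt'_rel_edge:
  assumes H: "H \<in> Qt' (pscale sc)" and e0: "spec_Qt sc 0 H \<in> Qt' sc" and e1: "spec_Qt sc 1 H \<in> Qt' sc"
  shows "(spec_Qt sc 0 H, spec_Qt sc 1 H) \<in> Qt'_rel sc"
  unfolding Qt'_rel_def by (rule htpy_edge[where ?ev0.0="spec_Qt sc 0" and ?ev1.0="spec_Qt sc 1", OF H e0 e1])

lemma Qt_rel_sym: "(x, y) \<in> Qt_rel sc \<Longrightarrow> (y, x) \<in> Qt_rel sc"
  unfolding Qt_rel_def by (rule htpy_sym)
lemma Qt_rel_trans: "(x, y) \<in> Qt_rel sc \<Longrightarrow> (y, z) \<in> Qt_rel sc \<Longrightarrow> (x, z) \<in> Qt_rel sc"
  unfolding Qt_rel_def by (rule htpy_trans)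

lemma degree_le_1: "degree [:p, d:] \<le> 1"
  by (simp add: degree_pCons_eq_if)

lemma peval_line: assumes m: "module sc" shows "peval sc 0 [:p, d:] = p" "peval sc 1 [:p, d:] = p + d"
  by (simp_all add: peval_le[OF m degree_le_1] mod_scale_one[OF m] mod_scale_zero_left[OF m])

lemma Qt_line:
  assumes x: "(f, p, s) \<in> Qt sc" and y: "(f, p', s) \<in> Qt sc"
  shows "((f, p, s), (f, p', s)) \<in> Qt_rel sc"
proof -
  have f: "f \<in> dual sc" and e: "f p + s * (s - 1) = 0" "f p' + s * (s - 1) = 0" using x y by (auto simp: Qt_def)
  have m: "module sc" using dual_module[OF f] .
  define P where "P = [:p, p' - p:]"
  have z: "f 0 = 0" by (rule dual_zero[OF f])
  have fpp: "f p' = f p" using e by (metis add_right_cancel)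
  have "pext f P + [:s:] * ([:s:] - 1) = 0"
  proof (rule poly_eqI)
    fix n
    have sq: "[:s:] * ([:s:] - 1) = [:s * (s - 1):]"
      by (rule poly_eqI) (simp add: mult_pCons_left coeff_pCons split: nat.split)
    show "coeff (pext f P + [:s:] * ([:s:] - 1)) n = coeff 0 n"
      unfolding sq using e
      by (cases n) (auto simp: coeff_pext[of f, OF z] P_def dual_diff[OF f] coeff_pCons z fpp split: nat.split)
  qed
  then have H: "(pext f, P, [:s:]) \<in> Qt (pscale sc)" using pext_dual[OF f] by (simp add: Qt_def)
  have "spec_Qt sc 0 (pext f, P, [:s:]) = (f, p, s)" "spec_Qt sc 1 (pext f, P, [:s:]) = (f, p', s)"
    by (simp_all add: spec_Qt_def spec_dual_pext[OF f] P_def peval_line[OF m])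
  then show ?thesis using Qt_rel_edge[OF H m] by simp
qed

definition liftQ :: "('m \<Rightarrow> 'r::comm_ring_1) \<times> 'r \<Rightarrow> ('m \<Rightarrow> 'r) \<times> 'm \<times> 'r" where
  "liftQ = (\<lambda>(f, s). (f, SOME p. f p + s * (s - 1) = 0, s))"

lemma liftQ_Qt:
  assumes "(f, s) \<in> Qs sc"
  shows "liftQ (f, s) \<in> Qt sc" "nu (liftQ (f, s)) = (f, s)"
proof -
  have f: "f \<in> dual sc" and "s * (1 - s) \<in> range f" using assms by (auto simp: Qs_def)
  then obtain p where "f p = s * (1 - s)" by (metis rangeE)
  then have ex: "\<exists>p. f p + s * (s - 1) = 0" by (intro exI[of _ p]) (simp add: algebra_simps)
  show "liftQ (f, s) \<in> Qt sc" unfolding liftQ_def Qt_def using someI_ex[OF ex] f by simp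
  show "nu (liftQ (f, s)) = (f, s)" by (simp add: liftQ_def nu_def)
qed

lemma liftQ_Qt': "x \<in> Qs sc \<Longrightarrow> liftQ x \<in> Qt sc"
  using liftQ_Qt(1) by (cases x) auto

lemma nu_liftQ: "x \<in> Qs sc \<Longrightarrow> nu (liftQ x) = x"
  using liftQ_Qt(2) by (cases x) auto

lemma liftQ_nu: assumes x: "x \<in> Qt sc" shows "(liftQ (nu x), x) \<in> Qt_rel sc"
proof -
  obtain f p s where xx: "x = (f, p, s)" by (cases x)
  have Q: "(f, s) \<in> Qs sc" using nu_Qs[OF x] by (simp add: xx nu_def)
  obtain p' where "liftQ (f, s) = (f, p', s)" by (simp add: liftQ_def)
  then show ?thesis using Qt_line[of f p' s sc p] liftQ_Qt(1)[OF Q] x xx by (simp add: nu_def)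
qed

lemma nu_spec: "spec_Qs t (nu H) = nu (spec_Qt sc t H)"
  by (cases H) (simp add: nu_def spec_Qs_def spec_Qt_def)

lemma liftQ_edge:
  assumes H: "H \<in> Qs (pscale sc)" and m: "module sc"
  shows "(liftQ (spec_Qs 0 H), liftQ (spec_Qs 1 H)) \<in> Qt_rel sc"
proof -
  define H' where "H' = liftQ H"
  have H': "H' \<in> Qt (pscale sc)" unfolding H'_def by (rule liftQ_Qt'[OF H])
  have nH: "nu H' = H" unfolding H'_def by (rule nu_liftQ[OF H])
  have e: "(liftQ (spec_Qs t H), spec_Qt sc t H') \<in> Qt_rel sc" for t
  proof -
    have sp: "spec_Qt sc t H' \<in> Qt sc" by (rule spec_Qt_Qt[OF H' m])
    have "nu (spec_Qt sc t H') = spec_Qs t H" using nu_spec[of t H' sc] nH by simp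
    then have "(liftQ (spec_Qs t H), spec_Qt sc t H') \<in> Qt_rel sc"
      using liftQ_nu[OF sp] by simp
    then show ?thesis .
  qed
  show ?thesis using Qt_rel_trans[OF Qt_rel_trans[OF e[of 0] Qt_rel_edge[OF H' m]] Qt_rel_sym[OF e[of 1]]] .
qed

definition kinv :: "('r::comm_ring_1 \<Rightarrow> 'm \<Rightarrow> 'm) \<Rightarrow> 'r \<Rightarrow> ('m \<Rightarrow> 'r) \<times> 'm \<times> 'r \<Rightarrow> ('m \<Rightarrow> 'r) \<times> 'm \<times> 'r" where
  "kinv sc h = (\<lambda>(f, p, z). (\<lambda>q. h * f q, sc h p, h * (z + 1)))"

lemma scaled_dual: "f \<in> dual sc \<Longrightarrow> (\<lambda>q. c * f q) \<in> dual sc"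
  by (rule dualI[OF dual_module]) (auto simp: dual_add dual_scale algebra_simps)

lemma kappa_Qt': assumes x: "x \<in> Qt sc" shows "kappa sc x \<in> Qt' sc"
proof -
  obtain f p s where xx: "x = (f, p, s)" by (cases x)
  have f: "f \<in> dual sc" and e: "f p + s * (s - 1) = 0" using x xx by (auto simp: Qt_def)
  have "2 * f (sc 2 p) + (2 * s - 1)\<^sup>2 = 4 * (f p + s * (s - 1)) + 1"
    by (simp add: dual_scale[OF f] power2_eq_square algebra_simps)
  then show ?thesis using e scaled_dual[OF f] by (simp add: xx kappa_def Qt'_def)
qed

lemma kinv_Qt: assumes x: "x \<in> Qt' sc" and h: "2 * h = 1" shows "kinv sc h x \<in> Qt sc"
proof -
  obtain f p z where xx: "x = (f, p, z)" by (cases x)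
  have f: "f \<in> dual sc" and e: "f p + z\<^sup>2 = 1" using x xx by (auto simp: Qt'_def)
  have "h * f (sc h p) + h * (z + 1) * (h * (z + 1) - 1) = h * h * (f p + z\<^sup>2 - 1) + h * (z + 1) * (2 * h - 1)"
    by (simp add: dual_scale[OF f] power2_eq_square algebra_simps)
  also have "\<dots> = 0" using e h by simp
  finally show ?thesis using scaled_dual[OF f] by (simp add: xx kinv_def Qt_def)
qed

lemma kinv_kappa: assumes m: "module sc" and h: "2 * h = 1" shows "kinv sc h (kappa sc x) = x"
proof -
  obtain f p s where xx: "x = (f, p, s)" by (cases x)
  have hh: "h * 2 = 1" using h by (simp add: mult.commute)
  have "h * (2 * s - 1 + 1) = s" using hh by (simp add: mult.assoc[symmetric])
  moreover have "(\<lambda>q. h * (2 * f q)) = f" using hh by (simp add: mult.assoc[symmetric])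
  ultimately show ?thesis by (simp add: xx kinv_def kappa_def mod_scale_scale[OF m] hh mod_scale_one[OF m])
qed

lemma kappa_kinv: assumes m: "module sc" and h: "2 * h = 1" shows "kappa sc (kinv sc h x) = x"
proof -
  obtain f p z where xx: "x = (f, p, z)" by (cases x)
  have "2 * (h * (z + 1)) - 1 = z" using h by (simp add: mult.assoc[symmetric])
  moreover have "(\<lambda>q. 2 * (h * f q)) = f" using h by (simp add: mult.assoc[symmetric])
  ultimately show ?thesis by (simp add: xx kinv_def kappa_def mod_scale_scale[OF m] h mod_scale_one[OF m])
qed

lemma peval_pscale_const:
  assumes m: "module sc"
  shows "peval sc t (pscale sc [:c:] P) = sc c (peval sc t P)"
proof -
  have d: "degree (pscale sc [:c:] P) \<le> degree P"
    by (rule degree_le) (simp add: coeff_pscale_const[OF m] coeff_eq_0 mod_scale_zero_right[OF m])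
  have "peval sc t (pscale sc [:c:] P) = (\<Sum>j\<le>degree P. sc (t ^ j) (sc c (coeff P j)))"
    by (simp add: peval_le[OF m d] coeff_pscale_const[OF m])
  also have "\<dots> = (\<Sum>j\<le>degree P. sc c (sc (t ^ j) (coeff P j)))"
    by (simp add: mod_scale_scale[OF m] mult.commute)
  also have "\<dots> = sc c (peval sc t P)" by (simp add: peval_def mod_scale_sum_right[OF m])
  finally show ?thesis .
qed

lemma kappa_spec: assumes m: "module sc" shows "spec_Qt sc t (kappa (pscale sc) H) = kappa sc (spec_Qt sc t H)"
proof -
  obtain F P S where HH: "H = (F, P, S)" by (cases H)
  have "pscale sc 2 P = pscale sc [:2:] P" by (simp only: numeral_poly[symmetric])
  then show ?thesis by (simp add: HH kappa_def spec_Qt_def spec_dual_def peval_pscale_const[OF m])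
qed

lemma kinv_spec: assumes m: "module sc" shows "spec_Qt sc t (kinv (pscale sc) [:h:] H) = kinv sc h (spec_Qt sc t H)"
proof -
  obtain F P S where HH: "H = (F, P, S)" by (cases H)
  show ?thesis by (simp add: HH kinv_def spec_Qt_def spec_dual_def peval_pscale_const[OF m])
qed


lemma witness_rel':
  fixes sc :: "'a::comm_ring_1 \<Rightarrow> 'b::ab_group_add \<Rightarrow> 'b"
  assumes N: "noetherian_ring TYPE('a)" and L: "x \<in> LO sc"
    and wa: "chi_wit sc x a" and wb: "chi_wit sc x b"
  shows "(a, b) \<in> Qs_rel sc"
proof -
  obtain I \<omega> where x: "x = (I, \<omega>)" by (cases x)
  obtain f s where a: "a = (f, s)" by (cases a)
  obtain g t where b: "b = (g, t)" by (cases b)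
  show ?thesis using witness_rel[OF N L[unfolded x] wa[unfolded x a] wb[unfolded x b]] a b by simp
qed

lemma wit_Qs: "chi_wit sc x a \<Longrightarrow> a \<in> Qs sc"
  by (cases x, cases a) (simp add: chi_wit_def)

lemma eta'_LO': "a \<in> Qs sc \<Longrightarrow> eta' a \<in> LO sc"
  using eta'_LO by (cases a) auto

lemma eta'_wit': "a \<in> Qs sc \<Longrightarrow> chi_wit sc (eta' a) a"
  using eta'_wit by (cases a) auto

lemma witness_spec':
  assumes m: "module sc" and XL: "X \<in> LO (pscale sc)" and w: "chi_wit (pscale sc) X W"
  shows "chi_wit sc (spec_LO t X) (spec_Qs t W)"
proof -
  obtain J \<Omega> where x: "X = (J, \<Omega>)" by (cases X)
  obtain F S where a: "W = (F, S)" by (cases W)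
  show ?thesis using witness_spec[OF m XL[unfolded x] w[unfolded x a]] x a by simp
qed

lemma eta'_spec': "H \<in> Qs (pscale sc) \<Longrightarrow> module sc \<Longrightarrow> spec_LO t (eta' H) = eta' (spec_Qs t H)"
  using eta'_spec by (cases H) auto

lemma two_const_poly: assumes h: "2 * h = (1::'a::comm_ring_1)" shows "(2::'a poly) * [:h:] = 1"
proof -
  have "(2::'a poly) * [:h:] = [:h:] + [:h:]" by (rule mult_2)
  also have "\<dots> = [:h + h:]" by (simp only: add_pCons add_0_left)
  also have "h + h = 1" using h by (simp only: mult_2)
  also have "[:1:] = (1::'a poly)" by (simp only: one_pCons)
  finally show ?thesis .
qed

theorem lemma2p8:
  fixes scale :: "'a::comm_ring_1 \<Rightarrow> 'b::ab_group_add \<Rightarrow> 'b"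
  assumes "noetherian_ring TYPE('a)"
    and "contains_field_with_half TYPE('a)"
    and "module scale"
    and "projective_module scale"
  shows
    "(\<forall>x\<in>LO scale. \<exists>a. chi_wit scale x a)
     \<and> (\<forall>x y a b. (x, y) \<in> LO_rel scale \<longrightarrow> chi_wit scale x a \<longrightarrow> chi_wit scale y b
           \<longrightarrow> (a, b) \<in> Qs_rel scale)
     \<and> (\<forall>D\<in>pi0_LO scale. \<forall>x\<in>D. \<forall>a. chi_wit scale x a \<longrightarrow> chibar scale D = Qs_rel scale `` {a})
     \<and> bij_betw (chibar scale) (pi0_LO scale) (pi0_Qs scale)
     \<and> compat (Qs_rel scale) (LO_rel scale) eta'
     \<and> (\<forall>C\<in>pi0_Qs scale. chibar scale (induced (LO_rel scale) eta' C) = C)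
     \<and> (\<forall>D\<in>pi0_LO scale. induced (LO_rel scale) eta' (chibar scale D) = D)
     \<and> compat (Qt_rel scale) (LO_rel scale) eta
     \<and> compat (Qt_rel scale) (Qs_rel scale) nu
     \<and> compat (Qt_rel scale) (Qt'_rel scale) (kappa scale)
     \<and> bij_betw (induced (LO_rel scale) eta) (pi0_Qt scale) (pi0_LO scale)
     \<and> bij_betw (induced (LO_rel scale) eta') (pi0_Qs scale) (pi0_LO scale)
     \<and> bij_betw (induced (Qs_rel scale) nu) (pi0_Qt scale) (pi0_Qs scale)
     \<and> bij_betw (induced (Qt'_rel scale) (kappa scale)) (pi0_Qt scale) (pi0_Qt' scale)"
proof -
  note N = assms(1) and m = assms(3) and P = assms(4)
  have NP: "noetherian_ring TYPE('a poly)" by (rule hilbert_basis[OF N])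
  have PP: "projective_module (pscale scale)" by (rule projective_pscale[OF P])
  obtain h :: 'a where h: "2 * h = 1" using assms(2) unfolding contains_field_with_half_def by blast
  have eqQs: "equiv (Qs scale) (Qs_rel scale)" unfolding Qs_rel_def by (rule htpy_equiv)
  have eqLO: "equiv (LO scale) (LO_rel scale)" unfolding LO_rel_def by (rule htpy_equiv)
  have eqQt: "equiv (Qt scale) (Qt_rel scale)" unfolding Qt_rel_def by (rule htpy_equiv)
  have eqQt': "equiv (Qt' scale) (Qt'_rel scale)" unfolding Qt'_rel_def by (rule htpy_equiv)
  have QsR: "a \<in> Qs scale \<Longrightarrow> (a, a) \<in> Qs_rel scale" for a unfolding Qs_rel_def by (rule htpy_refl)
  have LOR: "x \<in> LO scale \<Longrightarrow> (x, x) \<in> LO_rel scale" for x unfolding LO_rel_def by (rule htpy_refl)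
  have QtR: "x \<in> Qt scale \<Longrightarrow> (x, x) \<in> Qt_rel scale" for x unfolding Qt_rel_def by (rule htpy_refl)
  have Qt'R: "x \<in> Qt' scale \<Longrightarrow> (x, x) \<in> Qt'_rel scale" for x unfolding Qt'_rel_def by (rule htpy_refl)

  have c1: "\<forall>x\<in>LO scale. \<exists>a. chi_wit scale x a" using witness_exists[OF N P] by blast
  define chiw where "chiw x = (SOME a. chi_wit scale x a)" for x
  have chiw: "chi_wit scale x (chiw x)" if "x \<in> LO scale" for x
    unfolding chiw_def by (rule someI_ex) (use c1 that in blast)
  have chiw_Qs: "chiw x \<in> Qs scale" if "x \<in> LO scale" for x using wit_Qs[OF chiw[OF that]] .

  have compat_chiw: "compat (LO_rel scale) (Qs_rel scale) chiw"
    unfolding LO_rel_def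
  proof (rule htpy_compat[OF eqQs chiw_Qs])
    fix H assume H: "H \<in> LO (pscale scale)" and e0: "spec_LO 0 H \<in> LO scale" and e1: "spec_LO 1 H \<in> LO scale"
    obtain W where W: "chi_wit (pscale scale) H W" using witness_exists[OF NP PP H] by blast
    have WQ: "W \<in> Qs (pscale scale)" using wit_Qs[OF W] .
    have r0: "(chiw (spec_LO 0 H), spec_Qs 0 W) \<in> Qs_rel scale"
      by (rule witness_rel'[OF N e0 chiw[OF e0] witness_spec'[OF m H W]])
    have r1: "(chiw (spec_LO 1 H), spec_Qs 1 W) \<in> Qs_rel scale"
      by (rule witness_rel'[OF N e1 chiw[OF e1] witness_spec'[OF m H W]])
    show "(chiw (spec_LO 0 H), chiw (spec_LO 1 H)) \<in> Qs_rel scale"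
      using Qs_rel_trans[OF Qs_rel_trans[OF r0 Qs_rel_edge[OF WQ m]] Qs_rel_sym[OF r1]] .
  qed
  have c2: "\<forall>x y a b. (x, y) \<in> LO_rel scale \<longrightarrow> chi_wit scale x a \<longrightarrow> chi_wit scale y b
           \<longrightarrow> (a, b) \<in> Qs_rel scale"
  proof (intro allI impI)
    fix x y a b assume xy: "(x, y) \<in> LO_rel scale" and wa: "chi_wit scale x a" and wb: "chi_wit scale y b"
    have xL: "x \<in> LO scale" and yL: "y \<in> LO scale" using htpy_sub[OF xy[unfolded LO_rel_def]] by auto
    have r1: "(chiw x, chiw y) \<in> Qs_rel scale" using compat_chiw xy unfolding compat_def by blast
    have r0: "(a, chiw x) \<in> Qs_rel scale" by (rule witness_rel'[OF N xL wa chiw[OF xL]])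
    have r2: "(chiw y, b) \<in> Qs_rel scale" by (rule witness_rel'[OF N yL chiw[OF yL] wb])
    show "(a, b) \<in> Qs_rel scale" by (rule Qs_rel_trans[OF Qs_rel_trans[OF r0 r1] r2])
  qed
  have c3: "\<forall>D\<in>pi0_LO scale. \<forall>x\<in>D. \<forall>a. chi_wit scale x a \<longrightarrow> chibar scale D = Qs_rel scale `` {a}"
  proof (intro ballI allI impI)
    fix D x a assume D: "D \<in> pi0_LO scale" and x: "x \<in> D" and wa: "chi_wit scale x a"
    obtain x0 where x0: "x0 \<in> LO scale" "D = LO_rel scale `` {x0}" using D unfolding pi0_LO_def by (auto elim: quotientE)
    have aQ: "a \<in> Qs scale" using wit_Qs[OF wa] .
    have inD: "(x, y) \<in> LO_rel scale" if "y \<in> D" for y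
    proof -
      have a1: "(x0, x) \<in> LO_rel scale" using x x0 by simp
      have a2: "(x0, y) \<in> LO_rel scale" using that x0 by simp
      show ?thesis using htpy_trans[OF htpy_sym[OF a1[unfolded LO_rel_def]] a2[unfolded LO_rel_def]]
        unfolding LO_rel_def .
    qed
    show "chibar scale D = Qs_rel scale `` {a}"
    proof
      show "chibar scale D \<subseteq> Qs_rel scale `` {a}"
      proof
        fix z assume "z \<in> chibar scale D"
        then obtain y b where yb: "y \<in> D" "chi_wit scale y b" "z \<in> Qs_rel scale `` {b}"
          unfolding chibar_def by blast
        have "(a, b) \<in> Qs_rel scale" by (rule c2[rule_format, OF inD[OF yb(1)] wa yb(2)])
        then have "Qs_rel scale `` {b} = Qs_rel scale `` {a}" using equiv_class_eq_iff[OF eqQs] by blast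
        then show "z \<in> Qs_rel scale `` {a}" using yb(3) by simp
      qed
      show "Qs_rel scale `` {a} \<subseteq> chibar scale D" unfolding chibar_def using x wa by blast
    qed
  qed
  have chibar_class: "chibar scale (LO_rel scale `` {x}) = Qs_rel scale `` {chiw x}" if xL: "x \<in> LO scale" for x
  proof -
    have D: "LO_rel scale `` {x} \<in> pi0_LO scale" unfolding pi0_LO_def by (rule quotientI[OF xL])
    have xin: "x \<in> LO_rel scale `` {x}" by (rule equiv_class_self[OF eqLO xL])
    show ?thesis by (rule c3[rule_format, OF D xin chiw[OF xL]])
  qed

  have c5: "compat (Qs_rel scale) (LO_rel scale) eta'"
    unfolding Qs_rel_def
  proof (rule htpy_compat[OF eqLO eta'_LO'])
    fix H assume H: "H \<in> Qs (pscale scale)" and e0: "spec_Qs 0 H \<in> Qs scale" and e1: "spec_Qs 1 H \<in> Qs scale"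
    have "(spec_LO 0 (eta' H), spec_LO 1 (eta' H)) \<in> LO_rel scale"
      unfolding LO_rel_def
      by (rule htpy_edge[where ?ev0.0="spec_LO 0" and ?ev1.0="spec_LO 1", OF eta'_LO'[OF H]])
         (simp_all add: eta'_spec'[OF H m] eta'_LO'[OF e0] eta'_LO'[OF e1])
    then show "(eta' (spec_Qs 0 H), eta' (spec_Qs 1 H)) \<in> LO_rel scale"
      by (simp add: eta'_spec'[OF H m])
  qed
  have gf1: "(eta' (chiw x), x) \<in> LO_rel scale" if "x \<in> LO scale" for x
    using wit_eta'[OF that chiw[OF that]] LOR[OF that] by simp
  have fg1: "(chiw (eta' a), a) \<in> Qs_rel scale" if "a \<in> Qs scale" for a
    by (rule witness_rel'[OF N eta'_LO'[OF that] chiw[OF eta'_LO'[OF that]] eta'_wit'[OF that]])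
  have fg1': "(eta' (chiw x), x) \<in> LO_rel scale" if "x \<in> LO scale" for x using gf1[OF that] .
  have bij_chiw: "bij_betw (induced (Qs_rel scale) chiw) (pi0_LO scale) (pi0_Qs scale)"
    unfolding pi0_LO_def pi0_Qs_def
    by (rule induced_bij[OF eqLO eqQs compat_chiw c5 chiw_Qs eta'_LO' gf1 fg1])
  have c12: "bij_betw (induced (LO_rel scale) eta') (pi0_Qs scale) (pi0_LO scale)"
    unfolding pi0_LO_def pi0_Qs_def
    by (rule induced_bij[OF eqQs eqLO c5 compat_chiw eta'_LO' chiw_Qs fg1 gf1])
  have c4: "bij_betw (chibar scale) (pi0_LO scale) (pi0_Qs scale)"
  proof -
    have "chibar scale D = induced (Qs_rel scale) chiw D" if DD: "D \<in> pi0_LO scale" for D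
    proof -
      obtain x where x: "x \<in> LO scale" "D = LO_rel scale `` {x}" using DD unfolding pi0_LO_def by (auto elim: quotientE)
      show ?thesis using chibar_class[OF x(1)] induced_class[OF eqLO eqQs compat_chiw x(1)] x(2) by simp
    qed
    then have "bij_betw (chibar scale) (pi0_LO scale) (pi0_Qs scale) = bij_betw (induced (Qs_rel scale) chiw) (pi0_LO scale) (pi0_Qs scale)"
      by (rule bij_betw_cong)
    then show ?thesis using bij_chiw by simp
  qed
  have c6: "\<forall>C\<in>pi0_Qs scale. chibar scale (induced (LO_rel scale) eta' C) = C"
  proof
    fix C assume "C \<in> pi0_Qs scale"
    then obtain a where a: "a \<in> Qs scale" "C = Qs_rel scale `` {a}" unfolding pi0_Qs_def by (auto elim: quotientE)
    have "induced (LO_rel scale) eta' C = LO_rel scale `` {eta' a}" using induced_class[OF eqQs eqLO c5 a(1)] a(2) by simp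
    moreover have "Qs_rel scale `` {chiw (eta' a)} = Qs_rel scale `` {a}" using fg1[OF a(1)] equiv_class_eq_iff[OF eqQs] by blast
    ultimately show "chibar scale (induced (LO_rel scale) eta' C) = C" using chibar_class[OF eta'_LO'[OF a(1)]] a(2) by simp
  qed
  have c7: "\<forall>D\<in>pi0_LO scale. induced (LO_rel scale) eta' (chibar scale D) = D"
  proof
    fix D assume "D \<in> pi0_LO scale"
    then obtain x where x: "x \<in> LO scale" "D = LO_rel scale `` {x}" unfolding pi0_LO_def by (auto elim: quotientE)
    have "induced (LO_rel scale) eta' (chibar scale D) = LO_rel scale `` {eta' (chiw x)}"
      using chibar_class[OF x(1)] induced_class[OF eqQs eqLO c5 chiw_Qs[OF x(1)]] x(2) by simp
    also have "\<dots> = D" using wit_eta'[OF x(1) chiw[OF x(1)]] x(2) by simp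
    finally show "induced (LO_rel scale) eta' (chibar scale D) = D" .
  qed
  have c9: "compat (Qt_rel scale) (Qs_rel scale) nu"
    unfolding Qt_rel_def
  proof (rule htpy_compat[OF eqQs nu_Qs])
    fix H assume H: "H \<in> Qt (pscale scale)" and e0: "spec_Qt scale 0 H \<in> Qt scale" and e1: "spec_Qt scale 1 H \<in> Qt scale"
    show "(nu (spec_Qt scale 0 H), nu (spec_Qt scale 1 H)) \<in> Qs_rel scale"
      using Qs_rel_edge[OF nu_Qs[OF H] m] by (simp add: nu_spec[of _ H scale])
  qed
  have eta_eq: "eta = (\<lambda>x. eta' (nu x))" by (rule ext) (simp add: eta_def)
  have c8: "compat (Qt_rel scale) (LO_rel scale) eta" unfolding eta_eq by (rule compat_comp[OF c9 c5])
  have c10: "compat (Qt_rel scale) (Qt'_rel scale) (kappa scale)"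
    unfolding Qt_rel_def
  proof (rule htpy_compat[OF eqQt' kappa_Qt'])
    fix H assume H: "H \<in> Qt (pscale scale)" and e0: "spec_Qt scale 0 H \<in> Qt scale" and e1: "spec_Qt scale 1 H \<in> Qt scale"
    have "(spec_Qt scale 0 (kappa (pscale scale) H), spec_Qt scale 1 (kappa (pscale scale) H)) \<in> Qt'_rel scale"
      by (rule Qt'_rel_edge[OF kappa_Qt'[OF H]]) (simp_all add: kappa_spec[OF m] kappa_Qt'[OF e0] kappa_Qt'[OF e1])
    then show "(kappa scale (spec_Qt scale 0 H), kappa scale (spec_Qt scale 1 H)) \<in> Qt'_rel scale"
      by (simp add: kappa_spec[OF m])
  qed
  have compat_kinv: "compat (Qt'_rel scale) (Qt_rel scale) (kinv scale h)"
    unfolding Qt'_rel_def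
  proof (rule htpy_compat[OF eqQt kinv_Qt[OF _ h]])
    fix H assume H: "H \<in> Qt' (pscale scale)" and e0: "spec_Qt scale 0 H \<in> Qt' scale" and e1: "spec_Qt scale 1 H \<in> Qt' scale"
    have H': "kinv (pscale scale) [:h:] H \<in> Qt (pscale scale)" by (rule kinv_Qt[OF H two_const_poly[OF h]])
    show "(kinv scale h (spec_Qt scale 0 H), kinv scale h (spec_Qt scale 1 H)) \<in> Qt_rel scale"
      using Qt_rel_edge[OF H' m] by (simp add: kinv_spec[OF m])
  qed
  have compat_lift: "compat (Qs_rel scale) (Qt_rel scale) liftQ"
    unfolding Qs_rel_def
  proof (rule htpy_compat[OF eqQt liftQ_Qt'])
    fix H assume H: "H \<in> Qs (pscale scale)"
    show "(liftQ (spec_Qs 0 H), liftQ (spec_Qs 1 H)) \<in> Qt_rel scale" by (rule liftQ_edge[OF H m])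
  qed
  have fgl: "(nu (liftQ y), y) \<in> Qs_rel scale" if yQ: "y \<in> Qs scale" for y
  proof -
    have "nu (liftQ y) = y" by (rule nu_liftQ[OF yQ])
    then show ?thesis using QsR[OF yQ] by simp
  qed
  have c13: "bij_betw (induced (Qs_rel scale) nu) (pi0_Qt scale) (pi0_Qs scale)"
    unfolding pi0_Qt_def pi0_Qs_def
    by (rule induced_bij[OF eqQt eqQs c9 compat_lift nu_Qs liftQ_Qt' liftQ_nu fgl])
  have c14: "bij_betw (induced (Qt'_rel scale) (kappa scale)) (pi0_Qt scale) (pi0_Qt' scale)"
    unfolding pi0_Qt_def pi0_Qt'_def
    by (rule induced_bij[OF eqQt eqQt' c10 compat_kinv kappa_Qt' kinv_Qt[OF _ h]])
       (simp_all add: kinv_kappa[OF m h] kappa_kinv[OF m h] QtR Qt'R)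
  have c11: "bij_betw (induced (LO_rel scale) eta) (pi0_Qt scale) (pi0_LO scale)"
  proof -
    have "bij_betw (\<lambda>C. induced (LO_rel scale) eta' (induced (Qs_rel scale) nu C)) (pi0_Qt scale) (pi0_LO scale)"
      using bij_betw_trans[OF c13 c12] by (simp add: comp_def)
    moreover have "induced (LO_rel scale) eta C = induced (LO_rel scale) eta' (induced (Qs_rel scale) nu C)"
      if CC: "C \<in> pi0_Qt scale" for C
    proof -
      obtain x where x: "x \<in> Qt scale" "C = Qt_rel scale `` {x}" using CC unfolding pi0_Qt_def by (auto elim: quotientE)
      show ?thesis using induced_class[OF eqQt eqLO c8 x(1)] induced_class[OF eqQt eqQs c9 x(1)]
          induced_class[OF eqQs eqLO c5 nu_Qs[OF x(1)]] x(2) by (simp add: eta_def)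
    qed
    moreover have "bij_betw (induced (LO_rel scale) eta) (pi0_Qt scale) (pi0_LO scale) = bij_betw (\<lambda>C. induced (LO_rel scale) eta' (induced (Qs_rel scale) nu C)) (pi0_Qt scale) (pi0_LO scale)"
      by (rule bij_betw_cong) (rule calculation(2))
    ultimately show ?thesis by simp
  qed
  show ?thesis by (intro conjI c1 c2 c3 c4 c5 c6 c7 c8 c9 c10 c11 c12 c13 c14)
qed


end
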